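(* If $\langle P\mid\Gamma\rangle$ is correct and $\langle P\mid\Gamma\rangle\sim\langle P'\mid\Gamma\rangle$, then $\langle P'\mid\Gamma\rangle$ is also correct.
   Context: Write ⅋ for par. A pre-proof graph $\langle P\mid\Gamma\rangle$ is an MLL linking tree $P$ (generated by $\mathsf1\mid a\otimes a^\perp\mid a^\perp\otimes a\mid\bot\otimes L\mid L\otimes\bot\mid L⅋L$) together with a sequent $\Gamma$ of MLL formulas whose leaves coincide with those of $P$. A switching deletes, at each ⅋-node, one of its two child edges; the graph is correct if all switchings are connected and acyclic. The relation $\sim$ is the smallest equivalence on pre-proof graphs with $P[Q⅋R]\sim P[R⅋Q]$, $P[(Q⅋R)⅋S]\sim P[Q⅋(R⅋S)]$, $P[Q\otimes R]\sim P[R\otimes Q]$, $P[\bot_i\otimes(Q\otimes\bot_j)]\sim P[(\bot_i\otimes Q)\otimes\bot_j]$, and $P[Q⅋(R\otimes\bot_i)]\sim P[(Q⅋R)\otimes\bot_i]$, the last only if in every extended switching of the left side with respect to $\bot_i$ (a switching with the edge between $\bot_i$ and its parent also removed) no node of $Q$ is connected to $\bot_i$. *)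

theory Defs
  imports Main
begin

text \<open>Leaves carry a label (occurrence name) of type 'l; atoms carry an atom name of type 'a.
  Pos a l is the atom a, Neg a l is the dual atom a-perp, One l the unit 1, Bot l the unit bottom.\<close>
datatype ('a, 'l) lf = Pos 'a 'l | Neg 'a 'l | One 'l | Bot 'l

datatype 'x tr = Leaf 'x | Tens "'x tr" "'x tr" | Par "'x tr" "'x tr"

type_synonym ('a, 'l) form = "('a, 'l) lf tr"

fun lbl :: "('a, 'l) lf \<Rightarrow> 'l" where
  "lbl (Pos a l) = l" | "lbl (Neg a l) = l" | "lbl (One l) = l" | "lbl (Bot l) = l"

fun leaves :: "'x tr \<Rightarrow> 'x list" where
  "leaves (Leaf x) = [x]"
| "leaves (Tens A B) = leaves A @ leaves B"
| "leaves (Par A B) = leaves A @ leaves B"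

inductive linking :: "('a, 'l) form \<Rightarrow> bool" where
  lk_one: "linking (Leaf (One l))"
| lk_ax1: "linking (Tens (Leaf (Pos a l)) (Leaf (Neg a m)))"
| lk_ax2: "linking (Tens (Leaf (Neg a l)) (Leaf (Pos a m)))"
| lk_botl: "linking Q \<Longrightarrow> linking (Tens (Leaf (Bot l)) Q)"
| lk_botr: "linking Q \<Longrightarrow> linking (Tens Q (Leaf (Bot l)))"
| lk_par: "linking Q \<Longrightarrow> linking R \<Longrightarrow> linking (Par Q R)"

definition pre_proof_graph :: "('a, 'l) form \<Rightarrow> ('a, 'l) form list \<Rightarrow> bool" where
  "pre_proof_graph P \<Gamma> \<longleftrightarrow> linking P
     \<and> distinct (map lbl (leaves P))
     \<and> distinct (map lbl (concat (map leaves \<Gamma>)))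
     \<and> set (leaves P) = set (concat (map leaves \<Gamma>))"

text \<open>Positions are paths; False = left child, True = right child.\<close>
fun subtree_at :: "'x tr \<Rightarrow> bool list \<Rightarrow> 'x tr option" where
  "subtree_at t [] = Some t"
| "subtree_at (Leaf x) (d # p) = None"
| "subtree_at (Tens A B) (d # p) = subtree_at (if d then B else A) p"
| "subtree_at (Par A B) (d # p) = subtree_at (if d then B else A) p"

text \<open>replace_at t p u is the context t[ ] at position p filled with u.\<close>
fun replace_at :: "'x tr \<Rightarrow> bool list \<Rightarrow> 'x tr \<Rightarrow> 'x tr" where
  "replace_at t [] u = u"
| "replace_at (Leaf x) (d # p) u = Leaf x"
| "replace_at (Tens A B) (d # p) u =
     (if d then Tens A (replace_at B p u) else Tens (replace_at A p u) B)"
| "replace_at (Par A B) (d # p) u =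
     (if d then Par A (replace_at B p u) else Par (replace_at A p u) B)"

text \<open>Nodes: internal nodes of P (by position), internal nodes of the k-th formula of Gamma
  (by index and position), and leaves, which are shared between P and Gamma (by label).\<close>
datatype 'l node = PN "bool list" | GN nat "bool list" | LN 'l

definition pnode :: "('a, 'l) form \<Rightarrow> bool list \<Rightarrow> 'l node" where
  "pnode P p = (case subtree_at P p of Some (Leaf x) \<Rightarrow> LN (lbl x) | _ \<Rightarrow> PN p)"

definition gnode :: "('a, 'l) form list \<Rightarrow> nat \<Rightarrow> bool list \<Rightarrow> 'l node" where
  "gnode \<Gamma> k p = (case subtree_at (\<Gamma> ! k) p of Some (Leaf x) \<Rightarrow> LN (lbl x) | _ \<Rightarrow> GN k p)"

definition vertices :: "('a, 'l) form \<Rightarrow> ('a, 'l) form list \<Rightarrow> 'l node set" where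
  "vertices P \<Gamma> = {pnode P p | p. subtree_at P p \<noteq> None}
     \<union> {gnode \<Gamma> k p | k p. k < length \<Gamma> \<and> subtree_at (\<Gamma> ! k) p \<noteq> None}"

text \<open>Parent-child edges of the graph, as tuples (parent, side, child, parent is a par node).\<close>
definition tedges :: "('a, 'l) form \<Rightarrow> ('a, 'l) form list \<Rightarrow> ('l node \<times> bool \<times> 'l node \<times> bool) set" where
  "tedges P \<Gamma> =
     {(PN p, d, pnode P (p @ [d]), False) | p d A B. subtree_at P p = Some (Tens A B)}
   \<union> {(PN p, d, pnode P (p @ [d]), True) | p d A B. subtree_at P p = Some (Par A B)}
   \<union> {(GN k p, d, gnode \<Gamma> k (p @ [d]), False) | k p d A B.
        k < length \<Gamma> \<and> subtree_at (\<Gamma> ! k) p = Some (Tens A B)}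
   \<union> {(GN k p, d, gnode \<Gamma> k (p @ [d]), True) | k p d A B.
        k < length \<Gamma> \<and> subtree_at (\<Gamma> ! k) p = Some (Par A B)}"

text \<open>A switching s: at each par node u, the child edge on side s u is deleted.\<close>
definition sw_edges :: "('a, 'l) form \<Rightarrow> ('a, 'l) form list \<Rightarrow> ('l node \<Rightarrow> bool) \<Rightarrow> 'l node set set" where
  "sw_edges P \<Gamma> s = {{u, v} | u d v par. (u, d, v, par) \<in> tedges P \<Gamma> \<and> \<not> (par \<and> s u = d)}"

fun is_PN :: "'l node \<Rightarrow> bool" where
  "is_PN (PN p) = True" | "is_PN _ = False"

text \<open>Extended switching with respect to bot_i: additionally the edge between the leaf bot_i and
  its parent in the linking tree P is removed.\<close>
definition ext_sw_edges :: "('a, 'l) form \<Rightarrow> ('a, 'l) form list \<Rightarrow> ('l node \<Rightarrow> bool) \<Rightarrow> 'l \<Rightarrow> 'l node set set" where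
  "ext_sw_edges P \<Gamma> s i = {{u, v} | u d v par. (u, d, v, par) \<in> tedges P \<Gamma> \<and> \<not> (par \<and> s u = d)
       \<and> \<not> (is_PN u \<and> v = LN i)}"

definition adj :: "'v set set \<Rightarrow> 'v \<Rightarrow> 'v \<Rightarrow> bool" where
  "adj E u v \<longleftrightarrow> {u, v} \<in> E"

definition gconnected :: "'v set \<Rightarrow> 'v set set \<Rightarrow> bool" where
  "gconnected V E \<longleftrightarrow> (\<forall>u\<in>V. \<forall>v\<in>V. (adj E)\<^sup>*\<^sup>* u v)"

text \<open>A cycle is a list of at least three distinct vertices, consecutive ones adjacent and the
  last adjacent to the first (the graphs considered here have no loops or multiple edges).\<close>
definition gacyclic :: "'v set set \<Rightarrow> bool" where
  "gacyclic E \<longleftrightarrow> \<not> (\<exists>cs. length cs \<ge> 3 \<and> distinct cs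
       \<and> (\<forall>j. Suc j < length cs \<longrightarrow> adj E (cs ! j) (cs ! Suc j))
       \<and> adj E (last cs) (hd cs))"

definition correct :: "('a, 'l) form \<Rightarrow> ('a, 'l) form list \<Rightarrow> bool" where
  "correct P \<Gamma> \<longleftrightarrow> pre_proof_graph P \<Gamma>
     \<and> (\<forall>s. gconnected (vertices P \<Gamma>) (sw_edges P \<Gamma> s) \<and> gacyclic (sw_edges P \<Gamma> s))"

inductive sim_step :: "('a, 'l) form list \<Rightarrow> ('a, 'l) form \<Rightarrow> ('a, 'l) form \<Rightarrow> bool"
  for \<Gamma> :: "('a, 'l) form list" where
  par_comm: "subtree_at P p = Some (Par Q R) \<Longrightarrow>
     sim_step \<Gamma> P (replace_at P p (Par R Q))"
| par_assoc: "subtree_at P p = Some (Par (Par Q R) S) \<Longrightarrow>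
     sim_step \<Gamma> P (replace_at P p (Par Q (Par R S)))"
| tens_comm: "subtree_at P p = Some (Tens Q R) \<Longrightarrow>
     sim_step \<Gamma> P (replace_at P p (Tens R Q))"
| bot_assoc: "subtree_at P p = Some (Tens (Leaf (Bot i)) (Tens Q (Leaf (Bot j)))) \<Longrightarrow>
     sim_step \<Gamma> P (replace_at P p (Tens (Tens (Leaf (Bot i)) Q) (Leaf (Bot j))))"
| bot_switch: "subtree_at P p = Some (Par Q (Tens R (Leaf (Bot i)))) \<Longrightarrow>
     (\<forall>s q. subtree_at P (p @ [False] @ q) \<noteq> None \<longrightarrow>
        \<not> (adj (ext_sw_edges P \<Gamma> s i))\<^sup>*\<^sup>* (pnode P (p @ [False] @ q)) (LN i)) \<Longrightarrow>
     sim_step \<Gamma> P (replace_at P p (Tens (Par Q R) (Leaf (Bot i))))"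

definition ppg_step :: "(('a, 'l) form \<times> ('a, 'l) form list) \<Rightarrow> (('a, 'l) form \<times> ('a, 'l) form list) \<Rightarrow> bool" where
  "ppg_step G G' \<longleftrightarrow> (case (G, G') of ((P, \<Gamma>), (P', \<Gamma>')) \<Rightarrow>
     \<Gamma>' = \<Gamma> \<and> pre_proof_graph P \<Gamma> \<and> pre_proof_graph P' \<Gamma> \<and> sim_step \<Gamma> P P')"

definition sim :: "(('a, 'l) form \<times> ('a, 'l) form list) \<Rightarrow> (('a, 'l) form \<times> ('a, 'l) form list) \<Rightarrow> bool" where
  "sim = (\<lambda>G G'. ppg_step G G' \<or> ppg_step G' G)\<^sup>*\<^sup>*"

end

theory Submission
  imports Defs "HOL-Library.Transitive_Closure_Table"
begin


lemma adj_sym: "adj E u v = adj E v u"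
  by (simp add: adj_def insert_commute)

lemma reach_sym: "(adj E)\<^sup>*\<^sup>* u v \<Longrightarrow> (adj E)\<^sup>*\<^sup>* v u"
proof (induction rule: rtranclp_induct)
  case base then show ?case by simp
next
  case (step y z) then show ?case
    by (metis adj_sym converse_rtranclp_into_rtranclp)
qed

lemma reach_mono: assumes "E \<subseteq> E'" "(adj E)\<^sup>*\<^sup>* u v" shows "(adj E')\<^sup>*\<^sup>* u v"
  using assms(2) by (induction rule: rtranclp_induct) (use assms(1) in \<open>auto simp: adj_def intro: rtranclp.rtrancl_into_rtrancl\<close>)

lemma reach_edge: "{u,v} \<in> E \<Longrightarrow> (adj E)\<^sup>*\<^sup>* u v"
  by (simp add: adj_def r_into_rtranclp)

lemma reach_trans: "(adj E)\<^sup>*\<^sup>* u v \<Longrightarrow> (adj E)\<^sup>*\<^sup>* v w \<Longrightarrow> (adj E)\<^sup>*\<^sup>* u w"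
  by (rule rtranclp_trans)

lemma reach_closed: "(adj E)\<^sup>*\<^sup>* u v \<Longrightarrow> u \<in> C \<Longrightarrow> (\<forall>a b. {a,b} \<in> E \<longrightarrow> a \<in> C \<longrightarrow> b \<in> C) \<Longrightarrow> v \<in> C"
  by (induction rule: rtranclp_induct) (auto simp: adj_def)

lemma reach_insert_cases:
  assumes "(adj (insert {a,b} E))\<^sup>*\<^sup>* p q"
  shows "(adj E)\<^sup>*\<^sup>* p q \<or> ((adj E)\<^sup>*\<^sup>* p a \<and> (adj E)\<^sup>*\<^sup>* b q) \<or> ((adj E)\<^sup>*\<^sup>* p b \<and> (adj E)\<^sup>*\<^sup>* a q)"
  using assms
proof (induction rule: rtranclp_induct)
  case base then show ?case by simp
next
  case (step y z)
  then have e: "{y,z} = {a,b} \<or> {y,z} \<in> E" by (simp add: adj_def)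
  show ?case
  proof (cases "{y,z} \<in> E")
    case True
    then have "adj E y z" by (simp add: adj_def)
    with step.IH show ?thesis by (meson rtranclp.rtrancl_into_rtrancl)
  next
    case False
    with e have "(y = a \<and> z = b) \<or> (y = b \<and> z = a)" by (auto simp: doubleton_eq_iff)
    with step.IH show ?thesis by (metis rtranclp.rtrancl_refl)
  qed
qed

definition good :: "'v set set \<Rightarrow> bool" where
  "good E \<longleftrightarrow> (\<forall>e\<in>E. \<exists>u v. u \<noteq> v \<and> e = {u,v})"

definition brf :: "'v set set \<Rightarrow> bool" where
  "brf E \<longleftrightarrow> (\<forall>u v. {u,v} \<in> E \<longrightarrow> \<not> (adj (E - {{u,v}}))\<^sup>*\<^sup>* u v)"

lemma path_chain: "rtrancl_path r x ys y \<Longrightarrow> (\<forall>j. Suc j < length (x#ys) \<longrightarrow> r ((x#ys) ! j) ((x#ys) ! Suc j)) \<and> last (x#ys) = y"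
proof (induction rule: rtrancl_path.induct)
  case (base x) then show ?case by simp
next
  case (step x y ys z)
  then show ?case
    by (auto simp: nth_Cons split: nat.splits)
qed

lemma chain_reach:
  assumes "\<forall>j. Suc j < length cs \<longrightarrow> adj E (cs ! j) (cs ! Suc j)"
    and "1 \<le> i" "i < length cs"
    and "\<forall>j. 1 \<le> j \<longrightarrow> Suc j < length cs \<longrightarrow> {cs ! j, cs ! Suc j} \<noteq> e"
  shows "(adj (E - {e}))\<^sup>*\<^sup>* (cs ! 1) (cs ! i)"
  using assms(2,3)
proof (induction i rule: dec_induct)
  case base then show ?case by simp
next
  case (step n)
  then have "adj (E - {e}) (cs ! n) (cs ! Suc n)"
    using assms(1,4) by (simp add: adj_def)
  with step show ?case by (meson Suc_lessD rtranclp.rtrancl_into_rtrancl)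
qed

lemma acyc_iff:
  assumes "good E"
  shows "gacyclic E \<longleftrightarrow> brf E"
proof
  assume ac: "gacyclic E"
  show "brf E" unfolding brf_def
  proof (intro allI impI notI)
    fix u v assume uv: "{u,v} \<in> E" and r: "(adj (E - {{u,v}}))\<^sup>*\<^sup>* u v"
    have "u \<noteq> v" using uv assms unfolding good_def by (metis doubleton_eq_iff insert_absorb2)
    from r obtain xs where "rtrancl_path (adj (E - {{u,v}})) u xs v"
      by (auto simp: rtranclp_eq_rtrancl_path)
    then obtain ys where p: "rtrancl_path (adj (E - {{u,v}})) u ys v" and d: "distinct (u#ys)"
      by (rule rtrancl_path_distinct)
    from path_chain[OF p] have ch: "\<forall>j. Suc j < length (u#ys) \<longrightarrow> adj (E - {{u,v}}) ((u#ys) ! j) ((u#ys) ! Suc j)"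
      and l: "last (u#ys) = v" by auto
    have "ys \<noteq> []" using l \<open>u \<noteq> v\<close> by auto
    moreover have "ys \<noteq> [v]"
    proof
      assume "ys = [v]"
      then have "adj (E - {{u,v}}) u v" using ch by (metis One_nat_def length_Cons lessI list.size(3) nth_Cons_0 nth_Cons_Suc)
      then show False by (simp add: adj_def)
    qed
    ultimately have len: "length (u#ys) \<ge> 3"
      using l by (cases ys; cases "tl ys"; auto)
    have ch2: "\<forall>j. Suc j < length (u#ys) \<longrightarrow> adj E ((u#ys) ! j) ((u#ys) ! Suc j)"
      using ch by (auto simp: adj_def)
    have "adj E (last (u#ys)) (hd (u#ys))" using l uv by (simp add: adj_def insert_commute)
    with ac len d ch2 show False unfolding gacyclic_def by blast
  qed
next
  assume b: "brf E"
  show "gacyclic E" unfolding gacyclic_def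
  proof
    assume "\<exists>cs. 3 \<le> length cs \<and> distinct cs \<and> (\<forall>j. Suc j < length cs \<longrightarrow> adj E (cs ! j) (cs ! Suc j)) \<and> adj E (last cs) (hd cs)"
    then obtain cs where len: "3 \<le> length cs" and d: "distinct cs"
      and ch: "\<forall>j. Suc j < length cs \<longrightarrow> adj E (cs ! j) (cs ! Suc j)" and lh: "adj E (last cs) (hd cs)" by blast
    define e where "e = {cs ! 0, cs ! 1}"
    have eE: "e \<in> E" using ch len by (simp add: e_def adj_def)
    have ne: "\<forall>j. 1 \<le> j \<longrightarrow> Suc j < length cs \<longrightarrow> {cs ! j, cs ! Suc j} \<noteq> e"
    proof (intro allI impI)
      fix j assume j: "1 \<le> j" "Suc j < length cs"
      have "cs ! Suc j \<noteq> cs ! 0" using d j by (subst nth_eq_iff_index_eq; auto)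
      moreover have "cs ! Suc j \<noteq> cs ! 1" using d j by (subst nth_eq_iff_index_eq; auto)
      ultimately show "{cs ! j, cs ! Suc j} \<noteq> e" unfolding e_def by (auto simp: doubleton_eq_iff)
    qed
    have "(adj (E - {e}))\<^sup>*\<^sup>* (cs ! 1) (cs ! (length cs - 1))"
      using chain_reach[OF ch _ _ ne, of "length cs - 1"] len by simp
    moreover have "adj (E - {e}) (cs ! (length cs - 1)) (cs ! 0)"
    proof -
      have lst: "last cs = cs ! (length cs - 1)" using len by (subst last_conv_nth) auto
      have hd: "hd cs = cs ! 0" using len by (subst hd_conv_nth) auto
      have "cs ! (length cs - 1) \<noteq> cs ! 0" using d len by (subst nth_eq_iff_index_eq; auto)
      moreover have "cs ! (length cs - 1) \<noteq> cs ! 1" using d len by (subst nth_eq_iff_index_eq; auto)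
      ultimately have "{cs ! (length cs - 1), cs ! 0} \<noteq> e" unfolding e_def by (auto simp: doubleton_eq_iff)
      then show ?thesis using lh lst hd by (simp add: adj_def)
    qed
    ultimately have "(adj (E - {e}))\<^sup>*\<^sup>* (cs ! 1) (cs ! 0)" by (meson rtranclp.rtrancl_into_rtrancl)
    then have "(adj (E - {e}))\<^sup>*\<^sup>* (cs ! 0) (cs ! 1)" by (rule reach_sym)
    with b eE show False unfolding brf_def e_def by blast
  qed
qed

definition tree :: "'v set \<Rightarrow> 'v set set \<Rightarrow> bool" where
  "tree V E \<longleftrightarrow> gconnected V E \<and> brf E \<and> good E"

lemma exchange:
  assumes t: "tree V T" and e: "{u,w} \<in> T"
    and ra: "(adj (T - {{u,w}}))\<^sup>*\<^sup>* a u" and rb: "(adj (T - {{u,w}}))\<^sup>*\<^sup>* b w"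
  shows "tree V (insert {a,b} (T - {{u,w}}))"
proof -
  define T0 where "T0 = T - {{u,w}}"
  define T' where "T' = insert {a,b} T0"
  have nuw: "\<not> (adj T0)\<^sup>*\<^sup>* u w" using t e unfolding tree_def brf_def T0_def by blast
  have nab: "\<not> (adj T0)\<^sup>*\<^sup>* a b"
  proof
    assume "(adj T0)\<^sup>*\<^sup>* a b"
    then have "(adj T0)\<^sup>*\<^sup>* u w" using ra rb unfolding T0_def
      by (meson reach_sym rtranclp_trans)
    with nuw show False ..
  qed
  then have ab: "a \<noteq> b" by auto
  have sub: "T0 \<subseteq> T'" unfolding T'_def by auto
  have uw': "(adj T')\<^sup>*\<^sup>* u w"
  proof -
    have "(adj T')\<^sup>*\<^sup>* u a" using reach_mono[OF sub] ra reach_sym unfolding T0_def by metis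
    moreover have "(adj T')\<^sup>*\<^sup>* a b" unfolding T'_def by (rule reach_edge) simp
    moreover have "(adj T')\<^sup>*\<^sup>* b w" using reach_mono[OF sub] rb unfolding T0_def by metis
    ultimately show ?thesis by (meson rtranclp_trans)
  qed
  have step: "adj T x y \<Longrightarrow> (adj T')\<^sup>*\<^sup>* x y" for x y
  proof (cases "{x,y} = {u,w}")
    case True
    assume "adj T x y"
    from True have "(x = u \<and> y = w) \<or> (x = w \<and> y = u)" by (auto simp: doubleton_eq_iff)
    then show ?thesis using uw' reach_sym by metis
  next
    case False
    assume "adj T x y"
    then have "{x,y} \<in> T'" using False unfolding T'_def T0_def adj_def by auto
    then show ?thesis by (rule reach_edge)
  qed
  have conn: "(adj T)\<^sup>*\<^sup>* x y \<Longrightarrow> (adj T')\<^sup>*\<^sup>* x y" for x y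
    by (induction rule: rtranclp_induct) (auto intro: rtranclp_trans step)
  have gc: "gconnected V T'" using t conn unfolding tree_def gconnected_def by blast
  have gd: "good T'" using t ab unfolding tree_def good_def T'_def T0_def by auto
  have br: "brf T'" unfolding brf_def
  proof (intro allI impI notI)
    fix c d assume cd: "{c,d} \<in> T'" and r: "(adj (T' - {{c,d}}))\<^sup>*\<^sup>* c d"
    show False
    proof (cases "{c,d} = {a,b}")
      case True
      have "T' - {{c,d}} \<subseteq> T0" unfolding T'_def using True by auto
      from reach_mono[OF this r] have "(adj T0)\<^sup>*\<^sup>* c d" .
      with True have "(adj T0)\<^sup>*\<^sup>* a b" by (metis doubleton_eq_iff reach_sym)
      with nab show False ..
    next
      case False
      then have cdT0: "{c,d} \<in> T0" using cd unfolding T'_def by auto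
      have eq: "T' - {{c,d}} = insert {a,b} (T0 - {{c,d}})" unfolding T'_def using False by auto
      from r[unfolded eq] have
        "(adj (T0 - {{c,d}}))\<^sup>*\<^sup>* c d \<or> ((adj (T0 - {{c,d}}))\<^sup>*\<^sup>* c a \<and> (adj (T0 - {{c,d}}))\<^sup>*\<^sup>* b d)
          \<or> ((adj (T0 - {{c,d}}))\<^sup>*\<^sup>* c b \<and> (adj (T0 - {{c,d}}))\<^sup>*\<^sup>* a d)"
        by (rule reach_insert_cases)
      then show False
      proof (elim disjE conjE)
        assume "(adj (T0 - {{c,d}}))\<^sup>*\<^sup>* c d"
        then have "(adj (T - {{c,d}}))\<^sup>*\<^sup>* c d" by (rule reach_mono[rotated]) (auto simp: T0_def)
        moreover have "{c,d} \<in> T" using cdT0 unfolding T0_def by auto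
        ultimately show False using t unfolding tree_def brf_def by blast
      next
        assume h1: "(adj (T0 - {{c,d}}))\<^sup>*\<^sup>* c a" and h2: "(adj (T0 - {{c,d}}))\<^sup>*\<^sup>* b d"
        have s: "T0 - {{c,d}} \<subseteq> T0" by auto
        have "(adj T0)\<^sup>*\<^sup>* a c" using reach_mono[OF s h1] reach_sym by metis
        moreover have "(adj T0)\<^sup>*\<^sup>* c d" using cdT0 by (rule reach_edge)
        moreover have "(adj T0)\<^sup>*\<^sup>* d b" using reach_mono[OF s h2] reach_sym by metis
        ultimately have "(adj T0)\<^sup>*\<^sup>* a b" by (meson rtranclp_trans)
        with nab show False ..
      next
        assume h1: "(adj (T0 - {{c,d}}))\<^sup>*\<^sup>* c b" and h2: "(adj (T0 - {{c,d}}))\<^sup>*\<^sup>* a d"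
        have s: "T0 - {{c,d}} \<subseteq> T0" by auto
        have "(adj T0)\<^sup>*\<^sup>* a d" using reach_mono[OF s h2] by metis
        moreover have "(adj T0)\<^sup>*\<^sup>* d c" using cdT0 reach_edge reach_sym by metis
        moreover have "(adj T0)\<^sup>*\<^sup>* c b" using reach_mono[OF s h1] by metis
        ultimately have "(adj T0)\<^sup>*\<^sup>* a b" by (meson rtranclp_trans)
        with nab show False ..
      qed
    qed
  qed
  show ?thesis using gc br gd unfolding tree_def T'_def T0_def by simp
qed

lemma tree_conn: "tree V E \<Longrightarrow> u \<in> V \<Longrightarrow> v \<in> V \<Longrightarrow> (adj E)\<^sup>*\<^sup>* u v"
  unfolding tree_def gconnected_def by blast

lemma tree_bridge: "tree V E \<Longrightarrow> {u,v} \<in> E \<Longrightarrow> \<not> (adj (E - {{u,v}}))\<^sup>*\<^sup>* u v"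
  unfolding tree_def brf_def by blast

lemma reach_fresh: assumes "(adj Oe)\<^sup>*\<^sup>* a y" "\<forall>e\<in>Oe. y \<notin> e" shows "a = y"
proof (rule ccontr)
  assume ay: "a \<noteq> y"
  have "y \<in> {v. v \<noteq> y}"
  proof (rule reach_closed[OF assms(1)])
    show "a \<in> {v. v \<noteq> y}" using ay by simp
    show "\<forall>p q. {p, q} \<in> Oe \<longrightarrow> p \<in> {v. v \<noteq> y} \<longrightarrow> q \<in> {v. v \<noteq> y}"
      using assms(2) by blast
  qed
  then show False by simp
qed

lemma reach_sub: "(adj Oe)\<^sup>*\<^sup>* u v \<Longrightarrow> Oe \<subseteq> E \<Longrightarrow> (adj E)\<^sup>*\<^sup>* u v"
  by (rule reach_mono)

lemma exch':
  assumes "tree V T" "{u,w} \<in> T" "(adj (T - {{u,w}}))\<^sup>*\<^sup>* a u" "(adj (T - {{u,w}}))\<^sup>*\<^sup>* b w"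
    "insert {a,b} (T - {{u,w}}) = T'"
  shows "tree V T'"
  using exchange[OF assms(1-4)] unfolding assms(5) .


lemma core_assoc_fwd:
  assumes T1: "tree V (Oe \<union> {{x,y},{y,a}})" and T2: "tree V (Oe \<union> {{x,y},{y,b}})"
    and T3: "tree V (Oe \<union> {{x,c},{y,a}})" and T4: "tree V (Oe \<union> {{x,c},{y,b}})"
    and fy: "\<forall>e\<in>Oe. y \<notin> e" and fx: "\<forall>z\<in>{a,b,c}. {x,z} \<notin> Oe"
    and d: "x \<noteq> y" "a \<noteq> y" "b \<noteq> y" "c \<noteq> y" "x \<noteq> a" "x \<noteq> b" "x \<noteq> c"
    and V: "x \<in> V" "a \<in> V" "b \<in> V"
  shows "tree V (Oe \<union> {{x,a},{y,b}})" "tree V (Oe \<union> {{x,a},{y,c}})"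
    "tree V (Oe \<union> {{x,y},{y,b}})" "tree V (Oe \<union> {{x,y},{y,c}})"
proof -
  have nax: "\<not> (adj Oe)\<^sup>*\<^sup>* a x"
  proof
    assume h: "(adj Oe)\<^sup>*\<^sup>* a x"
    have "(adj (Oe \<union> {{x,y},{y,a}} - {{y,a}}))\<^sup>*\<^sup>* y a"
    proof -
      have "(adj (Oe \<union> {{x,y},{y,a}} - {{y,a}}))\<^sup>*\<^sup>* y x"
        by (rule reach_edge) (use d in \<open>auto simp: doubleton_eq_iff\<close>)
      moreover have "(adj (Oe \<union> {{x,y},{y,a}} - {{y,a}}))\<^sup>*\<^sup>* x a"
        by (rule reach_sub[OF reach_sym[OF h]]) (use fy in blast)
      ultimately show ?thesis by (rule rtranclp_trans)
    qed
    with tree_bridge[OF T1] show False by blast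
  qed
  have ac: "(adj Oe)\<^sup>*\<^sup>* a c"
  proof (rule ccontr)
    assume nac: "\<not> (adj Oe)\<^sup>*\<^sup>* a c"
    let ?C = "{v. (adj Oe)\<^sup>*\<^sup>* a v} \<union> {y}"
    have "x \<in> ?C"
    proof (rule reach_closed[of "Oe \<union> {{x,c},{y,a}}" a x ?C])
      show "(adj (Oe \<union> {{x,c},{y,a}}))\<^sup>*\<^sup>* a x" using tree_conn[OF T3] V by blast
      show "a \<in> ?C" by simp
      show "\<forall>p q. {p,q} \<in> Oe \<union> {{x,c},{y,a}} \<longrightarrow> p \<in> ?C \<longrightarrow> q \<in> ?C"
      proof (intro allI impI)
        fix p q assume e: "{p,q} \<in> Oe \<union> {{x,c},{y,a}}" and p: "p \<in> ?C"
        show "q \<in> ?C"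
        proof (cases "{p,q} \<in> Oe")
          case True
          then have "p \<noteq> y" using fy by auto
          with p have "(adj Oe)\<^sup>*\<^sup>* a p" by auto
          then have "(adj Oe)\<^sup>*\<^sup>* a q" using True by (meson adj_def rtranclp.rtrancl_into_rtrancl)
          then show ?thesis by simp
        next
          case False
          with e have "{p,q} = {x,c} \<or> {p,q} = {y,a}" by auto
          then show ?thesis using p nax nac d by (auto simp: doubleton_eq_iff)
        qed
      qed
    qed
    then show False using nax d by auto
  qed
  have nbx: "\<not> (adj Oe)\<^sup>*\<^sup>* b x"
  proof
    assume h: "(adj Oe)\<^sup>*\<^sup>* b x"
    have "(adj (Oe \<union> {{x,y},{y,b}} - {{y,b}}))\<^sup>*\<^sup>* y b"
    proof -
      have "(adj (Oe \<union> {{x,y},{y,b}} - {{y,b}}))\<^sup>*\<^sup>* y x"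
        by (rule reach_edge) (use d in \<open>auto simp: doubleton_eq_iff\<close>)
      moreover have "(adj (Oe \<union> {{x,y},{y,b}} - {{y,b}}))\<^sup>*\<^sup>* x b"
        by (rule reach_sub[OF reach_sym[OF h]]) (use fy in blast)
      ultimately show ?thesis by (rule rtranclp_trans)
    qed
    with tree_bridge[OF T2] show False by blast
  qed
  have bc: "(adj Oe)\<^sup>*\<^sup>* b c"
  proof (rule ccontr)
    assume nbc: "\<not> (adj Oe)\<^sup>*\<^sup>* b c"
    let ?C = "{v. (adj Oe)\<^sup>*\<^sup>* b v} \<union> {y}"
    have "x \<in> ?C"
    proof (rule reach_closed[of "Oe \<union> {{x,c},{y,b}}" b x ?C])
      show "(adj (Oe \<union> {{x,c},{y,b}}))\<^sup>*\<^sup>* b x" using tree_conn[OF T4] V by blast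
      show "b \<in> ?C" by simp
      show "\<forall>p q. {p,q} \<in> Oe \<union> {{x,c},{y,b}} \<longrightarrow> p \<in> ?C \<longrightarrow> q \<in> ?C"
      proof (intro allI impI)
        fix p q assume e: "{p,q} \<in> Oe \<union> {{x,c},{y,b}}" and p: "p \<in> ?C"
        show "q \<in> ?C"
        proof (cases "{p,q} \<in> Oe")
          case True
          then have "p \<noteq> y" using fy by auto
          with p have "(adj Oe)\<^sup>*\<^sup>* b p" by auto
          then have "(adj Oe)\<^sup>*\<^sup>* b q" using True by (meson adj_def rtranclp.rtrancl_into_rtrancl)
          then show ?thesis by simp
        next
          case False
          with e have "{p,q} = {x,c} \<or> {p,q} = {y,b}" by auto
          then show ?thesis using p nbx nbc d by (auto simp: doubleton_eq_iff)
        qed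
      qed
    qed
    then show False using nbx d by auto
  qed
  show 3: "tree V (Oe \<union> {{x,y},{y,b}})" by (rule T2)
  show 4: "tree V (Oe \<union> {{x,y},{y,c}})"
  proof (rule exch'[OF T2, of y b y c])
    show "{y,b} \<in> Oe \<union> {{x,y},{y,b}}" by simp
    show "(adj (Oe \<union> {{x,y},{y,b}} - {{y,b}}))\<^sup>*\<^sup>* y y" by simp
    show "(adj (Oe \<union> {{x,y},{y,b}} - {{y,b}}))\<^sup>*\<^sup>* c b"
      by (rule reach_sub[OF reach_sym[OF bc]]) (use fy in blast)
    show "insert {y,c} (Oe \<union> {{x,y},{y,b}} - {{y,b}}) = Oe \<union> {{x,y},{y,c}}"
      proof -
        have "{y,b} \<notin> Oe" using fy fx by blast
        moreover have "{y,b} \<noteq> {x,y}" using d by (auto simp: doubleton_eq_iff)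
        ultimately show ?thesis by blast
      qed
  qed
  show 1: "tree V (Oe \<union> {{x,a},{y,b}})"
  proof (rule exch'[OF T2, of x y x a])
    show "{x,y} \<in> Oe \<union> {{x,y},{y,b}}" by simp
    show "(adj (Oe \<union> {{x,y},{y,b}} - {{x,y}}))\<^sup>*\<^sup>* x x" by simp
    have s: "Oe \<subseteq> Oe \<union> {{x,y},{y,b}} - {{x,y}}" using fy by auto
    have "(adj (Oe \<union> {{x,y},{y,b}} - {{x,y}}))\<^sup>*\<^sup>* a b"
      using reach_sub[OF rtranclp_trans[OF ac reach_sym[OF bc]] s] .
    moreover have "(adj (Oe \<union> {{x,y},{y,b}} - {{x,y}}))\<^sup>*\<^sup>* b y"
      by (rule reach_edge) (use d in \<open>auto simp: doubleton_eq_iff insert_commute\<close>)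
    ultimately show "(adj (Oe \<union> {{x,y},{y,b}} - {{x,y}}))\<^sup>*\<^sup>* a y" by (rule rtranclp_trans)
    show "insert {x,a} (Oe \<union> {{x,y},{y,b}} - {{x,y}}) = Oe \<union> {{x,a},{y,b}}"
      proof -
        have "{x,y} \<notin> Oe" using fy fx by blast
        moreover have "{x,y} \<noteq> {y,b}" using d by (auto simp: doubleton_eq_iff)
        ultimately show ?thesis by blast
      qed
  qed
  show "tree V (Oe \<union> {{x,a},{y,c}})"
  proof (rule exch'[OF 1, of y b y c])
    show "{y,b} \<in> Oe \<union> {{x,a},{y,b}}" by simp
    show "(adj (Oe \<union> {{x,a},{y,b}} - {{y,b}}))\<^sup>*\<^sup>* y y" by simp
    show "(adj (Oe \<union> {{x,a},{y,b}} - {{y,b}}))\<^sup>*\<^sup>* c b"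
      by (rule reach_sub[OF reach_sym[OF bc]]) (use fy in blast)
    show "insert {y,c} (Oe \<union> {{x,a},{y,b}} - {{y,b}}) = Oe \<union> {{x,a},{y,c}}"
      proof -
        have "{y,b} \<notin> Oe" using fy fx by blast
        moreover have "{y,b} \<noteq> {x,a}" using d by (auto simp: doubleton_eq_iff)
        ultimately show ?thesis by blast
      qed
  qed
qed

lemma closure_helper:
  assumes "(adj E)\<^sup>*\<^sup>* u v" "u \<in> C" "v \<notin> C"
    "\<And>p q. {p,q} \<in> E \<Longrightarrow> p \<in> C \<Longrightarrow> q \<in> C"
  shows False
  using reach_closed[OF assms(1,2)] assms(3,4) by blast

lemma step_O: "(adj Oe)\<^sup>*\<^sup>* a p \<Longrightarrow> {p,q} \<in> Oe \<Longrightarrow> (adj Oe)\<^sup>*\<^sup>* a q"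
  by (meson adj_def rtranclp.rtrancl_into_rtrancl)

lemma core_assoc_bwd:
  assumes U1: "tree V (Oe \<union> {{x,a},{y,b}})" and U2: "tree V (Oe \<union> {{x,a},{y,c}})"
    and U3: "tree V (Oe \<union> {{x,y},{y,b}})" and U4: "tree V (Oe \<union> {{x,y},{y,c}})"
    and fy: "\<forall>e\<in>Oe. y \<notin> e" and fx: "\<forall>z\<in>{a,b,c}. {x,z} \<notin> Oe"
    and d: "x \<noteq> y" "a \<noteq> y" "b \<noteq> y" "c \<noteq> y" "x \<noteq> a" "x \<noteq> b" "x \<noteq> c"
    and V: "x \<in> V" "b \<in> V" "c \<in> V"
  shows "tree V (Oe \<union> {{x,y},{y,a}})" "tree V (Oe \<union> {{x,y},{y,b}})"
    "tree V (Oe \<union> {{x,c},{y,a}})" "tree V (Oe \<union> {{x,c},{y,b}})"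
proof -
  have nbx: "\<not> (adj Oe)\<^sup>*\<^sup>* b x"
  proof
    assume h: "(adj Oe)\<^sup>*\<^sup>* b x"
    have "(adj (Oe \<union> {{x,y},{y,b}} - {{y,b}}))\<^sup>*\<^sup>* y x"
      by (rule reach_edge) (use d in \<open>auto simp: doubleton_eq_iff\<close>)
    moreover have "(adj (Oe \<union> {{x,y},{y,b}} - {{y,b}}))\<^sup>*\<^sup>* x b"
      by (rule reach_sub[OF reach_sym[OF h]]) (use fy in blast)
    ultimately have "(adj (Oe \<union> {{x,y},{y,b}} - {{y,b}}))\<^sup>*\<^sup>* y b" by (rule rtranclp_trans)
    with tree_bridge[OF U3] show False by blast
  qed
  have ncx: "\<not> (adj Oe)\<^sup>*\<^sup>* c x"
  proof
    assume h: "(adj Oe)\<^sup>*\<^sup>* c x"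
    have "(adj (Oe \<union> {{x,y},{y,c}} - {{y,c}}))\<^sup>*\<^sup>* y x"
      by (rule reach_edge) (use d in \<open>auto simp: doubleton_eq_iff\<close>)
    moreover have "(adj (Oe \<union> {{x,y},{y,c}} - {{y,c}}))\<^sup>*\<^sup>* x c"
      by (rule reach_sub[OF reach_sym[OF h]]) (use fy in blast)
    ultimately have "(adj (Oe \<union> {{x,y},{y,c}} - {{y,c}}))\<^sup>*\<^sup>* y c" by (rule rtranclp_trans)
    with tree_bridge[OF U4] show False by blast
  qed
  have ba: "(adj Oe)\<^sup>*\<^sup>* b a"
  proof (rule ccontr)
    assume nba: "\<not> (adj Oe)\<^sup>*\<^sup>* b a"
    show False
    proof (rule closure_helper[of "Oe \<union> {{x,a},{y,b}}" b x "{v. (adj Oe)\<^sup>*\<^sup>* b v} \<union> {y}"])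
      show "(adj (Oe \<union> {{x,a},{y,b}}))\<^sup>*\<^sup>* b x" using tree_conn[OF U1] V by blast
      show "b \<in> {v. (adj Oe)\<^sup>*\<^sup>* b v} \<union> {y}" by simp
      show "x \<notin> {v. (adj Oe)\<^sup>*\<^sup>* b v} \<union> {y}" using nbx d by auto
      fix p q assume e: "{p,q} \<in> Oe \<union> {{x,a},{y,b}}" and p: "p \<in> {v. (adj Oe)\<^sup>*\<^sup>* b v} \<union> {y}"
      show "q \<in> {v. (adj Oe)\<^sup>*\<^sup>* b v} \<union> {y}"
      proof (cases "{p,q} \<in> Oe")
        case True
        then have "p \<noteq> y" using fy by auto
        with p have "(adj Oe)\<^sup>*\<^sup>* b p" by auto
        from step_O[OF this True] show ?thesis by simp
      next
        case False
        with e have "{p,q} = {x,a} \<or> {p,q} = {y,b}" by auto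
        then show ?thesis using p nbx nba d by (auto simp: doubleton_eq_iff)
      qed
    qed
  qed
  have ca: "(adj Oe)\<^sup>*\<^sup>* c a"
  proof (rule ccontr)
    assume nca: "\<not> (adj Oe)\<^sup>*\<^sup>* c a"
    show False
    proof (rule closure_helper[of "Oe \<union> {{x,a},{y,c}}" c x "{v. (adj Oe)\<^sup>*\<^sup>* c v} \<union> {y}"])
      show "(adj (Oe \<union> {{x,a},{y,c}}))\<^sup>*\<^sup>* c x" using tree_conn[OF U2] V by blast
      show "c \<in> {v. (adj Oe)\<^sup>*\<^sup>* c v} \<union> {y}" by simp
      show "x \<notin> {v. (adj Oe)\<^sup>*\<^sup>* c v} \<union> {y}" using ncx d by auto
      fix p q assume e: "{p,q} \<in> Oe \<union> {{x,a},{y,c}}" and p: "p \<in> {v. (adj Oe)\<^sup>*\<^sup>* c v} \<union> {y}"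
      show "q \<in> {v. (adj Oe)\<^sup>*\<^sup>* c v} \<union> {y}"
      proof (cases "{p,q} \<in> Oe")
        case True
        then have "p \<noteq> y" using fy by auto
        with p have "(adj Oe)\<^sup>*\<^sup>* c p" by auto
        from step_O[OF this True] show ?thesis by simp
      next
        case False
        with e have "{p,q} = {x,a} \<or> {p,q} = {y,c}" by auto
        then show ?thesis using p ncx nca d by (auto simp: doubleton_eq_iff)
      qed
    qed
  qed
  show 2: "tree V (Oe \<union> {{x,y},{y,b}})" by (rule U3)
  show "tree V (Oe \<union> {{x,y},{y,a}})"
  proof (rule exch'[OF U3, of y b y a])
    show "{y,b} \<in> Oe \<union> {{x,y},{y,b}}" by simp
    show "(adj (Oe \<union> {{x,y},{y,b}} - {{y,b}}))\<^sup>*\<^sup>* y y" by simp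
    show "(adj (Oe \<union> {{x,y},{y,b}} - {{y,b}}))\<^sup>*\<^sup>* a b"
      by (rule reach_sub[OF reach_sym[OF ba]]) (use fy in blast)
    show "insert {y,a} (Oe \<union> {{x,y},{y,b}} - {{y,b}}) = Oe \<union> {{x,y},{y,a}}"
      proof -
        have "{y,b} \<notin> Oe" using fy fx by blast
        moreover have "{y,b} \<noteq> {x,y}" using d by (auto simp: doubleton_eq_iff)
        ultimately show ?thesis by blast
      qed
  qed
  show 4: "tree V (Oe \<union> {{x,c},{y,b}})"
  proof (rule exch'[OF U3, of x y x c])
    show "{x,y} \<in> Oe \<union> {{x,y},{y,b}}" by simp
    show "(adj (Oe \<union> {{x,y},{y,b}} - {{x,y}}))\<^sup>*\<^sup>* x x" by simp
    have s: "Oe \<subseteq> Oe \<union> {{x,y},{y,b}} - {{x,y}}" using fy by auto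
    have "(adj (Oe \<union> {{x,y},{y,b}} - {{x,y}}))\<^sup>*\<^sup>* c b"
      using reach_sub[OF rtranclp_trans[OF ca reach_sym[OF ba]] s] .
    moreover have "(adj (Oe \<union> {{x,y},{y,b}} - {{x,y}}))\<^sup>*\<^sup>* b y"
      by (rule reach_edge) (use d in \<open>auto simp: doubleton_eq_iff insert_commute\<close>)
    ultimately show "(adj (Oe \<union> {{x,y},{y,b}} - {{x,y}}))\<^sup>*\<^sup>* c y" by (rule rtranclp_trans)
    show "insert {x,c} (Oe \<union> {{x,y},{y,b}} - {{x,y}}) = Oe \<union> {{x,c},{y,b}}"
      proof -
        have "{x,y} \<notin> Oe" using fy fx by blast
        moreover have "{x,y} \<noteq> {y,b}" using d by (auto simp: doubleton_eq_iff)
        ultimately show ?thesis by blast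
      qed
  qed
  show "tree V (Oe \<union> {{x,c},{y,a}})"
  proof (rule exch'[OF 4, of y b y a])
    show "{y,b} \<in> Oe \<union> {{x,c},{y,b}}" by simp
    show "(adj (Oe \<union> {{x,c},{y,b}} - {{y,b}}))\<^sup>*\<^sup>* y y" by simp
    show "(adj (Oe \<union> {{x,c},{y,b}} - {{y,b}}))\<^sup>*\<^sup>* a b"
      by (rule reach_sub[OF reach_sym[OF ba]]) (use fy in blast)
    show "insert {y,a} (Oe \<union> {{x,c},{y,b}} - {{y,b}}) = Oe \<union> {{x,c},{y,a}}"
      proof -
        have "{y,b} \<notin> Oe" using fy fx by blast
        moreover have "{y,b} \<noteq> {x,c}" using d by (auto simp: doubleton_eq_iff)
        ultimately show ?thesis by blast
      qed
  qed
qed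


lemma core_bs_fwd:
  assumes T1: "tree V (Oe \<union> {{r,a},{y,b},{y,t}})" and T2: "tree V (Oe \<union> {{r,y},{y,b},{y,t}})"
    and nat: "\<not> (adj Oe)\<^sup>*\<^sup>* a t"
    and fy: "\<forall>e\<in>Oe. y \<notin> e" and fr: "\<forall>z\<in>{a,b,t}. {r,z} \<notin> Oe"
    and d: "r \<noteq> y" "a \<noteq> y" "b \<noteq> y" "t \<noteq> y" "r \<noteq> a" "r \<noteq> b" "r \<noteq> t" "b \<noteq> t" "a \<noteq> t"
    and V: "a \<in> V" "y \<in> V"
  shows "tree V (Oe \<union> {{r,y},{r,t},{y,a}})" "tree V (Oe \<union> {{r,y},{r,t},{y,b}})"
proof -
  have nar: "\<not> (adj Oe)\<^sup>*\<^sup>* a r"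
  proof
    assume h: "(adj Oe)\<^sup>*\<^sup>* a r"
    have "(adj (Oe \<union> {{r,a},{y,b},{y,t}} - {{r,a}}))\<^sup>*\<^sup>* r a"
      by (rule reach_sub[OF reach_sym[OF h]]) (use fr in blast)
    with tree_bridge[OF T1] show False by blast
  qed
  have ab: "(adj Oe)\<^sup>*\<^sup>* a b"
  proof (rule ccontr)
    assume nab: "\<not> (adj Oe)\<^sup>*\<^sup>* a b"
    show False
    proof (rule closure_helper[of "Oe \<union> {{r,y},{y,b},{y,t}}" a y "{v. (adj Oe)\<^sup>*\<^sup>* a v}"])
      show "(adj (Oe \<union> {{r,y},{y,b},{y,t}}))\<^sup>*\<^sup>* a y" using tree_conn[OF T2] V by blast
      show "a \<in> {v. (adj Oe)\<^sup>*\<^sup>* a v}" by simp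
      show "y \<notin> {v. (adj Oe)\<^sup>*\<^sup>* a v}" using reach_fresh[OF _ fy] d by auto
      fix p q assume e: "{p,q} \<in> Oe \<union> {{r,y},{y,b},{y,t}}" and p: "p \<in> {v. (adj Oe)\<^sup>*\<^sup>* a v}"
      show "q \<in> {v. (adj Oe)\<^sup>*\<^sup>* a v}"
      proof (cases "{p,q} \<in> Oe")
        case True
        with p show ?thesis using step_O by auto
      next
        case False
        have ny: "p \<noteq> y" using p reach_fresh[OF _ fy] d by auto
        from False e have "{p,q} = {r,y} \<or> {p,q} = {y,b} \<or> {p,q} = {y,t}" by auto
        then show ?thesis using p ny nar nab nat by (auto simp: doubleton_eq_iff)
      qed
    qed
  qed
  show B: "tree V (Oe \<union> {{r,y},{r,t},{y,b}})"
  proof (rule exch'[OF T2, of y t r t])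
    show "{y,t} \<in> Oe \<union> {{r,y},{y,b},{y,t}}" by simp
    show "(adj (Oe \<union> {{r,y},{y,b},{y,t}} - {{y,t}}))\<^sup>*\<^sup>* r y"
      by (rule reach_edge) (use d in \<open>auto simp: doubleton_eq_iff\<close>)
    show "(adj (Oe \<union> {{r,y},{y,b},{y,t}} - {{y,t}}))\<^sup>*\<^sup>* t t" by simp
    show "insert {r,t} (Oe \<union> {{r,y},{y,b},{y,t}} - {{y,t}}) = Oe \<union> {{r,y},{r,t},{y,b}}"
      proof -
        have "{y,t} \<notin> Oe" using fy fr by blast
        moreover have "{y,t} \<noteq> {r,y}" "{y,t} \<noteq> {y,b}" using d by (auto simp: doubleton_eq_iff)
        ultimately show ?thesis by blast
      qed
  qed
  show "tree V (Oe \<union> {{r,y},{r,t},{y,a}})"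
  proof (rule exch'[OF B, of y b y a])
    show "{y,b} \<in> Oe \<union> {{r,y},{r,t},{y,b}}" by simp
    show "(adj (Oe \<union> {{r,y},{r,t},{y,b}} - {{y,b}}))\<^sup>*\<^sup>* y y" by simp
    show "(adj (Oe \<union> {{r,y},{r,t},{y,b}} - {{y,b}}))\<^sup>*\<^sup>* a b"
      by (rule reach_sub[OF ab]) (use fy in blast)
    show "insert {y,a} (Oe \<union> {{r,y},{r,t},{y,b}} - {{y,b}}) = Oe \<union> {{r,y},{r,t},{y,a}}"
      proof -
        have "{y,b} \<notin> Oe" using fy fr by blast
        moreover have "{y,b} \<noteq> {r,y}" "{y,b} \<noteq> {r,t}" using d by (auto simp: doubleton_eq_iff)
        ultimately show ?thesis by blast
      qed
  qed
qed


lemma core_bs_bwd: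
  assumes A: "tree V (Oe \<union> {{r,y},{r,t},{y,a}})" and B: "tree V (Oe \<union> {{r,y},{r,t},{y,b}})"
    and fy: "\<forall>e\<in>Oe. y \<notin> e" and fr: "\<forall>z\<in>{a,b,t}. {r,z} \<notin> Oe"
    and d: "r \<noteq> y" "a \<noteq> y" "b \<noteq> y" "t \<noteq> y" "r \<noteq> a" "r \<noteq> b" "r \<noteq> t" "b \<noteq> t" "a \<noteq> t"
    and V: "b \<in> V" "y \<in> V"
  shows "tree V (Oe \<union> {{r,a},{y,b},{y,t}})" "tree V (Oe \<union> {{r,y},{y,b},{y,t}})"
proof -
  have s: "Oe \<subseteq> Oe \<union> {{r,y},{r,t},{y,b}} - {{y,b}}" using fy by auto
  have yr: "(adj (Oe \<union> {{r,y},{r,t},{y,b}} - {{y,b}}))\<^sup>*\<^sup>* y r"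
    by (rule reach_edge) (use d in \<open>auto simp: doubleton_eq_iff\<close>)
  have nbr: "\<not> (adj Oe)\<^sup>*\<^sup>* b r"
  proof
    assume h: "(adj Oe)\<^sup>*\<^sup>* b r"
    have "(adj (Oe \<union> {{r,y},{r,t},{y,b}} - {{y,b}}))\<^sup>*\<^sup>* y b"
      using rtranclp_trans[OF yr reach_sub[OF reach_sym[OF h] s]] .
    with tree_bridge[OF B] show False by blast
  qed
  have nbt: "\<not> (adj Oe)\<^sup>*\<^sup>* b t"
  proof
    assume h: "(adj Oe)\<^sup>*\<^sup>* b t"
    have rt: "(adj (Oe \<union> {{r,y},{r,t},{y,b}} - {{y,b}}))\<^sup>*\<^sup>* r t"
      by (rule reach_edge) (use d in \<open>auto simp: doubleton_eq_iff\<close>)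
    have "(adj (Oe \<union> {{r,y},{r,t},{y,b}} - {{y,b}}))\<^sup>*\<^sup>* y b"
      using rtranclp_trans[OF rtranclp_trans[OF yr rt] reach_sub[OF reach_sym[OF h] s]] .
    with tree_bridge[OF B] show False by blast
  qed
  have ba: "(adj Oe)\<^sup>*\<^sup>* b a"
  proof (rule ccontr)
    assume nba: "\<not> (adj Oe)\<^sup>*\<^sup>* b a"
    show False
    proof (rule closure_helper[of "Oe \<union> {{r,y},{r,t},{y,a}}" b y "{v. (adj Oe)\<^sup>*\<^sup>* b v}"])
      show "(adj (Oe \<union> {{r,y},{r,t},{y,a}}))\<^sup>*\<^sup>* b y" using tree_conn[OF A] V by blast
      show "b \<in> {v. (adj Oe)\<^sup>*\<^sup>* b v}" by simp
      show "y \<notin> {v. (adj Oe)\<^sup>*\<^sup>* b v}" using reach_fresh[OF _ fy] d by auto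
      fix p q assume e: "{p,q} \<in> Oe \<union> {{r,y},{r,t},{y,a}}" and p: "p \<in> {v. (adj Oe)\<^sup>*\<^sup>* b v}"
      show "q \<in> {v. (adj Oe)\<^sup>*\<^sup>* b v}"
      proof (cases "{p,q} \<in> Oe")
        case True
        with p show ?thesis using step_O by auto
      next
        case False
        have ny: "p \<noteq> y" using p reach_fresh[OF _ fy] d by auto
        from False e have "{p,q} = {r,y} \<or> {p,q} = {r,t} \<or> {p,q} = {y,a}" by auto
        then show ?thesis using p ny nbr nba nbt by (auto simp: doubleton_eq_iff)
      qed
    qed
  qed
  show T2: "tree V (Oe \<union> {{r,y},{y,b},{y,t}})"
  proof (rule exch'[OF B, of r t y t])
    show "{r,t} \<in> Oe \<union> {{r,y},{r,t},{y,b}}" by simp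
    show "(adj (Oe \<union> {{r,y},{r,t},{y,b}} - {{r,t}}))\<^sup>*\<^sup>* y r"
      by (rule reach_edge) (use d in \<open>auto simp: doubleton_eq_iff\<close>)
    show "(adj (Oe \<union> {{r,y},{r,t},{y,b}} - {{r,t}}))\<^sup>*\<^sup>* t t" by simp
    show "insert {y,t} (Oe \<union> {{r,y},{r,t},{y,b}} - {{r,t}}) = Oe \<union> {{r,y},{y,b},{y,t}}"
      proof -
        have "{r,t} \<notin> Oe" using fy fr by blast
        moreover have "{r,t} \<noteq> {r,y}" "{r,t} \<noteq> {y,b}" using d by (auto simp: doubleton_eq_iff)
        ultimately show ?thesis by blast
      qed
  qed
  show "tree V (Oe \<union> {{r,a},{y,b},{y,t}})"
  proof (rule exch'[OF T2, of r y r a])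
    show "{r,y} \<in> Oe \<union> {{r,y},{y,b},{y,t}}" by simp
    show "(adj (Oe \<union> {{r,y},{y,b},{y,t}} - {{r,y}}))\<^sup>*\<^sup>* r r" by simp
    have s2: "Oe \<subseteq> Oe \<union> {{r,y},{y,b},{y,t}} - {{r,y}}" using fy by auto
    have "(adj (Oe \<union> {{r,y},{y,b},{y,t}} - {{r,y}}))\<^sup>*\<^sup>* b y"
      by (rule reach_edge) (use d in \<open>auto simp: doubleton_eq_iff insert_commute\<close>)
    then show "(adj (Oe \<union> {{r,y},{y,b},{y,t}} - {{r,y}}))\<^sup>*\<^sup>* a y"
      using rtranclp_trans[OF reach_sub[OF reach_sym[OF ba] s2]] by blast
    show "insert {r,a} (Oe \<union> {{r,y},{y,b},{y,t}} - {{r,y}}) = Oe \<union> {{r,a},{y,b},{y,t}}"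
      proof -
        have "{r,y} \<notin> Oe" using fy fr by blast
        moreover have "{r,y} \<noteq> {y,b}" "{r,y} \<noteq> {y,t}" using d by (auto simp: doubleton_eq_iff)
        ultimately show ?thesis by blast
      qed
  qed
qed


lemma core_ba:
  assumes T: "tree V (Oe \<union> {{r,i},{r,y},{y,a},{y,j}})"
    and fy: "\<forall>e\<in>Oe. y \<notin> e" and fr: "\<forall>z\<in>{i,j}. {r,z} \<notin> Oe"
    and d: "r \<noteq> y" "r \<noteq> i" "r \<noteq> a" "r \<noteq> j" "y \<noteq> i" "y \<noteq> a" "y \<noteq> j" "i \<noteq> a" "i \<noteq> j" "a \<noteq> j"
  shows "tree V (Oe \<union> {{r,y},{r,j},{y,i},{y,a}})"
proof -
  have T': "tree V (Oe \<union> {{r,y},{y,a},{y,j},{y,i}})"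
  proof (rule exch'[OF T, of r i y i])
    show "{r,i} \<in> Oe \<union> {{r,i},{r,y},{y,a},{y,j}}" by simp
    show "(adj (Oe \<union> {{r,i},{r,y},{y,a},{y,j}} - {{r,i}}))\<^sup>*\<^sup>* y r"
      by (rule reach_edge) (use d in \<open>auto simp: doubleton_eq_iff\<close>)
    show "(adj (Oe \<union> {{r,i},{r,y},{y,a},{y,j}} - {{r,i}}))\<^sup>*\<^sup>* i i" by simp
    show "insert {y,i} (Oe \<union> {{r,i},{r,y},{y,a},{y,j}} - {{r,i}}) = Oe \<union> {{r,y},{y,a},{y,j},{y,i}}"
      proof -
        have "{r,i} \<notin> Oe" using fy fr by blast
        moreover have "{r,i} \<noteq> {r,y}" "{r,i} \<noteq> {y,a}" "{r,i} \<noteq> {y,j}" using d by (auto simp: doubleton_eq_iff)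
        ultimately show ?thesis by blast
      qed
  qed
  show ?thesis
  proof (rule exch'[OF T', of y j r j])
    show "{y,j} \<in> Oe \<union> {{r,y},{y,a},{y,j},{y,i}}" by simp
    show "(adj (Oe \<union> {{r,y},{y,a},{y,j},{y,i}} - {{y,j}}))\<^sup>*\<^sup>* r y"
      by (rule reach_edge) (use d in \<open>auto simp: doubleton_eq_iff\<close>)
    show "(adj (Oe \<union> {{r,y},{y,a},{y,j},{y,i}} - {{y,j}}))\<^sup>*\<^sup>* j j" by simp
    show "insert {r,j} (Oe \<union> {{r,y},{y,a},{y,j},{y,i}} - {{y,j}}) = Oe \<union> {{r,y},{r,j},{y,i},{y,a}}"
      proof -
        have "{y,j} \<notin> Oe" using fy fr by blast
        moreover have "{y,j} \<noteq> {r,y}" "{y,j} \<noteq> {y,a}" "{y,j} \<noteq> {y,i}" using d by (auto simp: doubleton_eq_iff)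
        ultimately show ?thesis by blast
      qed
  qed
qed


lemma core_ba_bwd:
  assumes T: "tree V (Oe \<union> {{r,y},{r,j},{y,i},{y,a}})"
    and fy: "\<forall>e\<in>Oe. y \<notin> e" and fr: "\<forall>z\<in>{i,j}. {r,z} \<notin> Oe"
    and d: "r \<noteq> y" "r \<noteq> i" "r \<noteq> a" "r \<noteq> j" "y \<noteq> i" "y \<noteq> a" "y \<noteq> j" "i \<noteq> a" "i \<noteq> j" "a \<noteq> j"
  shows "tree V (Oe \<union> {{r,i},{r,y},{y,a},{y,j}})"
proof -
  have T': "tree V (Oe \<union> {{r,y},{r,j},{y,a},{r,i}})"
  proof (rule exch'[OF T, of y i r i])
    show "{y,i} \<in> Oe \<union> {{r,y},{r,j},{y,i},{y,a}}" by simp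
    show "(adj (Oe \<union> {{r,y},{r,j},{y,i},{y,a}} - {{y,i}}))\<^sup>*\<^sup>* r y"
      by (rule reach_edge) (use d in \<open>auto simp: doubleton_eq_iff\<close>)
    show "(adj (Oe \<union> {{r,y},{r,j},{y,i},{y,a}} - {{y,i}}))\<^sup>*\<^sup>* i i" by simp
    show "insert {r,i} (Oe \<union> {{r,y},{r,j},{y,i},{y,a}} - {{y,i}}) = Oe \<union> {{r,y},{r,j},{y,a},{r,i}}"
      proof -
        have "{y,i} \<notin> Oe" using fy fr by blast
        moreover have "{y,i} \<noteq> {r,y}" "{y,i} \<noteq> {r,j}" "{y,i} \<noteq> {y,a}" using d by (auto simp: doubleton_eq_iff)
        ultimately show ?thesis by blast
      qed
  qed
  show ?thesis
  proof (rule exch'[OF T', of r j y j])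
    show "{r,j} \<in> Oe \<union> {{r,y},{r,j},{y,a},{r,i}}" by simp
    show "(adj (Oe \<union> {{r,y},{r,j},{y,a},{r,i}} - {{r,j}}))\<^sup>*\<^sup>* y r"
      by (rule reach_edge) (use d in \<open>auto simp: doubleton_eq_iff\<close>)
    show "(adj (Oe \<union> {{r,y},{r,j},{y,a},{r,i}} - {{r,j}}))\<^sup>*\<^sup>* j j" by simp
    show "insert {y,j} (Oe \<union> {{r,y},{r,j},{y,a},{r,i}} - {{r,j}}) = Oe \<union> {{r,i},{r,y},{y,a},{y,j}}"
      proof -
        have "{r,j} \<notin> Oe" using fy fr by blast
        moreover have "{r,j} \<noteq> {r,y}" "{r,j} \<noteq> {y,a}" "{r,j} \<noteq> {r,i}" using d by (auto simp: doubleton_eq_iff)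
        ultimately show ?thesis by blast
      qed
  qed
qed





type_synonym 'l tup = "'l node \<times> bool \<times> 'l node \<times> bool"

fun nd :: "bool list \<Rightarrow> ('a,'l) form \<Rightarrow> 'l node" where
  "nd b (Leaf x) = LN (lbl x)" | "nd b (Tens A B) = PN b" | "nd b (Par A B) = PN b"

fun led :: "bool list \<Rightarrow> ('a,'l) form \<Rightarrow> 'l tup set" where
  "led b (Leaf x) = {}"
| "led b (Tens A B) = {(PN b, False, nd (b@[False]) A, False), (PN b, True, nd (b@[True]) B, False)}
     \<union> led (b@[False]) A \<union> led (b@[True]) B"
| "led b (Par A B) = {(PN b, False, nd (b@[False]) A, True), (PN b, True, nd (b@[True]) B, True)}
     \<union> led (b@[False]) A \<union> led (b@[True]) B"

fun lnodes :: "bool list \<Rightarrow> ('a,'l) form \<Rightarrow> 'l node set" where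
  "lnodes b (Leaf x) = {LN (lbl x)}"
| "lnodes b (Tens A B) = {PN b} \<union> lnodes (b@[False]) A \<union> lnodes (b@[True]) B"
| "lnodes b (Par A B) = {PN b} \<union> lnodes (b@[False]) A \<union> lnodes (b@[True]) B"

definition cat :: "bool list \<Rightarrow> ('a,'l) form \<Rightarrow> bool list \<Rightarrow> 'l node" where
  "cat b t q = (case subtree_at t q of Some (Leaf x) \<Rightarrow> LN (lbl x) | _ \<Rightarrow> PN (b@q))"

lemma cat_Nil: "cat b t [] = nd b t"
  by (cases t) (auto simp: cat_def)

lemma cat_Cons_T: "cat b (Tens A B) (d#q) = cat (b@[d]) (if d then B else A) q"
  by (auto simp: cat_def split: option.splits tr.splits)
lemma cat_Cons_P: "cat b (Par A B) (d#q) = cat (b@[d]) (if d then B else A) q"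
  by (auto simp: cat_def split: option.splits tr.splits)

lemma led_mem: "(u,d,v,par) \<in> led b t \<longleftrightarrow> (\<exists>q A B. u = PN (b@q) \<and> v = cat b t (q@[d]) \<and>
   (subtree_at t q = Some (Tens A B) \<and> \<not>par \<or> subtree_at t q = Some (Par A B) \<and> par))"
proof (induction t arbitrary: b)
  case (Leaf x)
  then show ?case by (auto elim: subtree_at.elims)
next
  case (Tens A B)
  show ?case
  proof
    assume "(u, d, v, par) \<in> led b (Tens A B)"
    then consider "(u,d,v,par) \<in> {(PN b, False, nd (b@[False]) A, False), (PN b, True, nd (b@[True]) B, False)}"
      | "(u,d,v,par) \<in> led (b@[False]) A" | "(u,d,v,par) \<in> led (b@[True]) B" by auto
    then show "\<exists>q A' B'. u = PN (b@q) \<and> v = cat b (Tens A B) (q@[d]) \<and>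
       (subtree_at (Tens A B) q = Some (Tens A' B') \<and> \<not>par \<or> subtree_at (Tens A B) q = Some (Par A' B') \<and> par)"
    proof cases
      case 1 then show ?thesis
        by (rule_tac x="[]" in exI) (auto simp: cat_Cons_T cat_Nil)
    next
      case 2
      then obtain q A' B' where "u = PN (b@[False]@q) \<and> v = cat (b@[False]) A (q@[d]) \<and>
        (subtree_at A q = Some (Tens A' B') \<and> \<not>par \<or> subtree_at A q = Some (Par A' B') \<and> par)"
        using Tens.IH(1)[of "b@[False]"] by auto
      then show ?thesis by (rule_tac x="False#q" in exI) (auto simp: cat_Cons_T)
    next
      case 3
      then obtain q A' B' where "u = PN (b@[True]@q) \<and> v = cat (b@[True]) B (q@[d]) \<and>
        (subtree_at B q = Some (Tens A' B') \<and> \<not>par \<or> subtree_at B q = Some (Par A' B') \<and> par)"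
        using Tens.IH(2)[of "b@[True]"] by auto
      then show ?thesis by (rule_tac x="True#q" in exI) (auto simp: cat_Cons_T)
    qed
  next
    assume "\<exists>q A' B'. u = PN (b@q) \<and> v = cat b (Tens A B) (q@[d]) \<and>
       (subtree_at (Tens A B) q = Some (Tens A' B') \<and> \<not>par \<or> subtree_at (Tens A B) q = Some (Par A' B') \<and> par)"
    then obtain q A' B' where h: "u = PN (b@q)" "v = cat b (Tens A B) (q@[d])"
      "(subtree_at (Tens A B) q = Some (Tens A' B') \<and> \<not>par \<or> subtree_at (Tens A B) q = Some (Par A' B') \<and> par)"
      by blast
    show "(u, d, v, par) \<in> led b (Tens A B)"
    proof (cases q)
      case Nil then show ?thesis using h by (cases d) (auto simp: cat_Cons_T cat_Nil)
    next
      case (Cons e q')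
      then show ?thesis using h Tens.IH[of "b@[e]"] by (cases e) (auto simp: cat_Cons_T)
    qed
  qed
next
  case (Par A B)
  show ?case
  proof
    assume "(u, d, v, par) \<in> led b (Par A B)"
    then consider "(u,d,v,par) \<in> {(PN b, False, nd (b@[False]) A, True), (PN b, True, nd (b@[True]) B, True)}"
      | "(u,d,v,par) \<in> led (b@[False]) A" | "(u,d,v,par) \<in> led (b@[True]) B" by auto
    then show "\<exists>q A' B'. u = PN (b@q) \<and> v = cat b (Par A B) (q@[d]) \<and>
       (subtree_at (Par A B) q = Some (Tens A' B') \<and> \<not>par \<or> subtree_at (Par A B) q = Some (Par A' B') \<and> par)"
    proof cases
      case 1 then show ?thesis
        by (rule_tac x="[]" in exI) (auto simp: cat_Cons_P cat_Nil)
    next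
      case 2
      then obtain q A' B' where "u = PN (b@[False]@q) \<and> v = cat (b@[False]) A (q@[d]) \<and>
        (subtree_at A q = Some (Tens A' B') \<and> \<not>par \<or> subtree_at A q = Some (Par A' B') \<and> par)"
        using Par.IH(1)[of "b@[False]"] by auto
      then show ?thesis by (rule_tac x="False#q" in exI) (auto simp: cat_Cons_P)
    next
      case 3
      then obtain q A' B' where "u = PN (b@[True]@q) \<and> v = cat (b@[True]) B (q@[d]) \<and>
        (subtree_at B q = Some (Tens A' B') \<and> \<not>par \<or> subtree_at B q = Some (Par A' B') \<and> par)"
        using Par.IH(2)[of "b@[True]"] by auto
      then show ?thesis by (rule_tac x="True#q" in exI) (auto simp: cat_Cons_P)
    qed
  next
    assume "\<exists>q A' B'. u = PN (b@q) \<and> v = cat b (Par A B) (q@[d]) \<and>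
       (subtree_at (Par A B) q = Some (Tens A' B') \<and> \<not>par \<or> subtree_at (Par A B) q = Some (Par A' B') \<and> par)"
    then obtain q A' B' where h: "u = PN (b@q)" "v = cat b (Par A B) (q@[d])"
      "(subtree_at (Par A B) q = Some (Tens A' B') \<and> \<not>par \<or> subtree_at (Par A B) q = Some (Par A' B') \<and> par)"
      by blast
    show "(u, d, v, par) \<in> led b (Par A B)"
    proof (cases q)
      case Nil then show ?thesis using h by (cases d) (auto simp: cat_Cons_P cat_Nil)
    next
      case (Cons e q')
      then show ?thesis using h Par.IH[of "b@[e]"] by (cases e) (auto simp: cat_Cons_P)
    qed
  qed
qed

lemma lnodes_mem: "v \<in> lnodes b t \<longleftrightarrow> (\<exists>q. subtree_at t q \<noteq> None \<and> v = cat b t q)"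
proof (induction t arbitrary: b)
  case (Leaf x)
  then show ?case by (auto simp: cat_def elim: subtree_at.elims) (metis option.simps(5) subtree_at.simps(1) tr.simps(10))
next
  case (Tens A B)
  show ?case
  proof
    assume "v \<in> lnodes b (Tens A B)"
    then consider "v = PN b" | "v \<in> lnodes (b@[False]) A" | "v \<in> lnodes (b@[True]) B" by auto
    then show "\<exists>q. subtree_at (Tens A B) q \<noteq> None \<and> v = cat b (Tens A B) q"
    proof cases
      case 1 then show ?thesis by (rule_tac x="[]" in exI) (simp add: cat_def)
    next
      case 2 then obtain q where "subtree_at A q \<noteq> None \<and> v = cat (b@[False]) A q" using Tens.IH(1) by blast
      then show ?thesis by (rule_tac x="False#q" in exI) (simp add: cat_Cons_T)
    next
      case 3 then obtain q where "subtree_at B q \<noteq> None \<and> v = cat (b@[True]) B q" using Tens.IH(2) by blast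
      then show ?thesis by (rule_tac x="True#q" in exI) (simp add: cat_Cons_T)
    qed
  next
    assume "\<exists>q. subtree_at (Tens A B) q \<noteq> None \<and> v = cat b (Tens A B) q"
    then obtain q where "subtree_at (Tens A B) q \<noteq> None" "v = cat b (Tens A B) q" by blast
    then show "v \<in> lnodes b (Tens A B)"
      using Tens.IH[of "b@[False]"] Tens.IH[of "b@[True]"]
      by (cases q) (auto simp: cat_Cons_T cat_Nil split: if_splits)
  qed
next
  case (Par A B)
  show ?case
  proof
    assume "v \<in> lnodes b (Par A B)"
    then consider "v = PN b" | "v \<in> lnodes (b@[False]) A" | "v \<in> lnodes (b@[True]) B" by auto
    then show "\<exists>q. subtree_at (Par A B) q \<noteq> None \<and> v = cat b (Par A B) q"
    proof cases
      case 1 then show ?thesis by (rule_tac x="[]" in exI) (simp add: cat_def)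
    next
      case 2 then obtain q where "subtree_at A q \<noteq> None \<and> v = cat (b@[False]) A q" using Par.IH(1) by blast
      then show ?thesis by (rule_tac x="False#q" in exI) (simp add: cat_Cons_P)
    next
      case 3 then obtain q where "subtree_at B q \<noteq> None \<and> v = cat (b@[True]) B q" using Par.IH(2) by blast
      then show ?thesis by (rule_tac x="True#q" in exI) (simp add: cat_Cons_P)
    qed
  next
    assume "\<exists>q. subtree_at (Par A B) q \<noteq> None \<and> v = cat b (Par A B) q"
    then obtain q where "subtree_at (Par A B) q \<noteq> None" "v = cat b (Par A B) q" by blast
    then show "v \<in> lnodes b (Par A B)"
      using Par.IH[of "b@[False]"] Par.IH[of "b@[True]"]
      by (cases q) (auto simp: cat_Cons_P cat_Nil split: if_splits)
  qed
qed

definition nonleaf :: "'x tr \<Rightarrow> bool" where "nonleaf t \<longleftrightarrow> (\<forall>x. t \<noteq> Leaf x)"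

fun ce :: "bool list \<Rightarrow> ('a,'l) form \<Rightarrow> bool list \<Rightarrow> 'l tup set" where
  "ce b t [] = {}"
| "ce b (Leaf x) (d#p) = {}"
| "ce b (Tens A B) (d#p) = {(PN b, False, if d then nd (b@[False]) A else PN (b@[False]), False),
      (PN b, True, if d then PN (b@[True]) else nd (b@[True]) B, False)}
     \<union> (if d then led (b@[False]) A \<union> ce (b@[True]) B p else ce (b@[False]) A p \<union> led (b@[True]) B)"
| "ce b (Par A B) (d#p) = {(PN b, False, if d then nd (b@[False]) A else PN (b@[False]), True),
      (PN b, True, if d then PN (b@[True]) else nd (b@[True]) B, True)}
     \<union> (if d then led (b@[False]) A \<union> ce (b@[True]) B p else ce (b@[False]) A p \<union> led (b@[True]) B)"

fun cn :: "bool list \<Rightarrow> ('a,'l) form \<Rightarrow> bool list \<Rightarrow> 'l node set" where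
  "cn b t [] = {}"
| "cn b (Leaf x) (d#p) = {}"
| "cn b (Tens A B) (d#p) = {PN b}
     \<union> (if d then lnodes (b@[False]) A \<union> cn (b@[True]) B p else cn (b@[False]) A p \<union> lnodes (b@[True]) B)"
| "cn b (Par A B) (d#p) = {PN b}
     \<union> (if d then lnodes (b@[False]) A \<union> cn (b@[True]) B p else cn (b@[False]) A p \<union> lnodes (b@[True]) B)"

lemma nd_nonleaf: "subtree_at A q = Some X \<Longrightarrow> nonleaf X \<Longrightarrow> nd c A = PN c"
  by (cases q; cases A) (auto simp: nonleaf_def)

lemma led_split: "subtree_at t p = Some X \<Longrightarrow> nonleaf X \<Longrightarrow> led b t = ce b t p \<union> led (b@p) X"
proof (induction t p arbitrary: b rule: subtree_at.induct)
  case (3 A B d p)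
  then show ?case by (cases d) (auto simp: nd_nonleaf)
next
  case (4 A B d p)
  then show ?case by (cases d) (auto simp: nd_nonleaf)
qed auto

lemma lnodes_split: "subtree_at t p = Some X \<Longrightarrow> lnodes b t = cn b t p \<union> lnodes (b@p) X"
proof (induction t p arbitrary: b rule: subtree_at.induct)
  case (3 A B d p)
  then show ?case by (cases d) auto
next
  case (4 A B d p)
  then show ?case by (cases d) auto
qed auto

lemma ce_replace: "subtree_at t p = Some X \<Longrightarrow> ce b (replace_at t p Y) p = ce b t p"
proof (induction t p arbitrary: b rule: subtree_at.induct)
  case (3 A B d p)
  then show ?case by (cases d) auto
next
  case (4 A B d p)
  then show ?case by (cases d) auto
qed auto

lemma cn_replace: "subtree_at t p = Some X \<Longrightarrow> cn b (replace_at t p Y) p = cn b t p"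
proof (induction t p arbitrary: b rule: subtree_at.induct)
  case (3 A B d p)
  then show ?case by (cases d) auto
next
  case (4 A B d p)
  then show ?case by (cases d) auto
qed auto

lemma subtree_replace: "subtree_at t p = Some X \<Longrightarrow> subtree_at (replace_at t p Y) p = Some Y"
  by (induction t p rule: subtree_at.induct) auto

definition inside :: "bool list \<Rightarrow> 'l node \<Rightarrow> bool" where
  "inside c n = (case n of PN q \<Rightarrow> (\<exists>r. q = c@r) | GN k q \<Rightarrow> False | LN l \<Rightarrow> True)"

definition outside :: "bool list \<Rightarrow> 'l node \<Rightarrow> bool" where
  "outside c n = (case n of PN q \<Rightarrow> \<not>(\<exists>r. q = c@r) | GN k q \<Rightarrow> True | LN l \<Rightarrow> True)"

lemma inside_nd: "inside c (nd c t)"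
  by (cases t) (auto simp: inside_def)

lemma inside_mono: "inside (c@[d]) n \<Longrightarrow> inside c n"
  by (auto simp: inside_def split: node.splits)

lemma led_inside: "(u,d,v,par) \<in> led c t \<Longrightarrow> inside c u \<and> inside c v"
proof (induction t arbitrary: c)
  case (Leaf x) then show ?case by simp
next
  case (Tens A B)
  have a: "inside c (PN c)" by (simp add: inside_def)
  have b: "inside c (nd (c@[e]) X)" for e X using inside_nd inside_mono by blast
  from Tens.prems show ?case using a b by auto (meson Tens.IH inside_mono)+
next
  case (Par A B)
  have a: "inside c (PN c)" by (simp add: inside_def)
  have b: "inside c (nd (c@[e]) X)" for e X using inside_nd inside_mono by blast
  from Par.prems show ?case using a b by auto (meson Par.IH inside_mono)+
qed

lemma lnodes_inside: "n \<in> lnodes c t \<Longrightarrow> inside c n"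
proof (induction t arbitrary: c)
  case (Leaf x) then show ?case by (auto simp: inside_def)
next
  case (Tens A B) then show ?case by (auto intro: inside_mono) (auto simp: inside_def)
next
  case (Par A B) then show ?case by (auto intro: inside_mono) (auto simp: inside_def)
qed


lemma inside_outside: "inside c n \<Longrightarrow> outside c n \<Longrightarrow> \<exists>l. n = LN l"
  by (auto simp: inside_def outside_def split: node.splits)

lemma inside_other: "inside (c@[d]@q) n \<Longrightarrow> outside (c@[\<not>d]@p) n"
  by (cases d) (auto simp: inside_def outside_def split: node.splits)

lemma io_F: "inside (b@[True]) n \<Longrightarrow> outside (b@False#p) n"
  by (auto simp: inside_def outside_def split: node.splits)
lemma io_T: "inside (b@[False]) n \<Longrightarrow> outside (b@True#p) n"
  by (auto simp: inside_def outside_def split: node.splits)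

lemma led_out_F: "(u,d,v,par) \<in> led (b@[True]) B \<Longrightarrow> outside (b@False#p) u \<and> outside (b@False#p) v"
  using led_inside io_F by blast
lemma led_out_T: "(u,d,v,par) \<in> led (b@[False]) B \<Longrightarrow> outside (b@True#p) u \<and> outside (b@True#p) v"
  using led_inside io_T by blast
lemma lnodes_out_F: "n \<in> lnodes (b@[True]) B \<Longrightarrow> outside (b@False#p) n"
  using lnodes_inside io_F by blast
lemma lnodes_out_T: "n \<in> lnodes (b@[False]) B \<Longrightarrow> outside (b@True#p) n"
  using lnodes_inside io_T by blast
lemma nd_out_F: "outside (b@False#p) (nd (b@[True]) B)"
  using inside_nd io_F by blast
lemma nd_out_T: "outside (b@True#p) (nd (b@[False]) B)"
  using inside_nd io_T by blast
lemma PN_out: "outside (b @ e # p) (PN b)" by (simp add: outside_def)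
lemma PN_out2: "PN (b@[e]) = PN (b @ e # p) \<or> outside (b @ e # p) (PN (b@[e]))"
  by (cases p) (auto simp: outside_def)

lemma ce_out: "(u,d,v,par) \<in> ce b t p \<Longrightarrow> outside (b@p) u \<and> (v = PN (b@p) \<or> outside (b@p) v)"
proof (induction b t p rule: ce.induct)
  case (3 b A B e p)
  from 3 show ?case
    using PN_out[of b e p] PN_out2[of b e p] nd_out_F[of b p] nd_out_T[of b p]
    by (cases e) (auto dest: led_out_F led_out_T)
next
  case (4 b A B e p)
  from 4 show ?case
    using PN_out[of b e p] PN_out2[of b e p] nd_out_F[of b p] nd_out_T[of b p]
    by (cases e) (auto dest: led_out_F led_out_T)
qed auto

lemma cn_out: "n \<in> cn b t p \<Longrightarrow> outside (b@p) n"
proof (induction b t p rule: cn.induct)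
  case (3 b A B e p)
  from 3 show ?case using PN_out[of b e p] by (cases e) (auto dest: lnodes_out_F lnodes_out_T)
next
  case (4 b A B e p)
  from 4 show ?case using PN_out[of b e p] by (cases e) (auto dest: lnodes_out_F lnodes_out_T)
qed auto


definition nmap :: "(bool list \<Rightarrow> bool list) \<Rightarrow> 'l node \<Rightarrow> 'l node" where
  "nmap \<phi> n = (case n of PN q \<Rightarrow> PN (\<phi> q) | _ \<Rightarrow> n)"

definition tmap :: "(bool list \<Rightarrow> bool list) \<Rightarrow> 'l tup \<Rightarrow> 'l tup" where
  "tmap \<phi> = (\<lambda>(u,d,v,par). (nmap \<phi> u, d, nmap \<phi> v, par))"

lemma tmap_simp[simp]: "tmap \<phi> (u,d,v,par) = (nmap \<phi> u, d, nmap \<phi> v, par)"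
  by (simp add: tmap_def)

lemma nmap_simps[simp]: "nmap \<phi> (PN q) = PN (\<phi> q)" "nmap \<phi> (LN l) = LN l" "nmap \<phi> (GN k q) = GN k q"
  by (simp_all add: nmap_def)

lemma nd_shift: assumes "\<forall>r. \<phi> (c@r) = c'@r" shows "nmap \<phi> (nd c t) = nd c' t"
proof -
  have "\<phi> c = c'" using spec[OF assms, of "[]"] by simp
  then show ?thesis by (cases t) auto
qed

lemma led_shift: "\<forall>r. \<phi> (c@r) = c'@r \<Longrightarrow> tmap \<phi> ` led c t = led c' t"
proof (induction t arbitrary: c c')
  case (Leaf x) then show ?case by simp
next
  case (Tens A B)
  have h1: "\<forall>r. \<phi> ((c@[False])@r) = (c'@[False])@r" "\<forall>r. \<phi> ((c@[True])@r) = (c'@[True])@r"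
    using Tens.prems by simp_all
  have h0: "\<phi> c = c'" using spec[OF Tens.prems, of "[]"] by simp
  show ?case using Tens.IH(1)[OF h1(1)] Tens.IH(2)[OF h1(2)] h0
    by (simp add: image_Un nd_shift[OF h1(1)] nd_shift[OF h1(2)])
next
  case (Par A B)
  have h1: "\<forall>r. \<phi> ((c@[False])@r) = (c'@[False])@r" "\<forall>r. \<phi> ((c@[True])@r) = (c'@[True])@r"
    using Par.prems by simp_all
  have h0: "\<phi> c = c'" using spec[OF Par.prems, of "[]"] by simp
  show ?case using Par.IH(1)[OF h1(1)] Par.IH(2)[OF h1(2)] h0
    by (simp add: image_Un nd_shift[OF h1(1)] nd_shift[OF h1(2)])
qed

lemma lnodes_shift: "\<forall>r. \<phi> (c@r) = c'@r \<Longrightarrow> nmap \<phi> ` lnodes c t = lnodes c' t"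
proof (induction t arbitrary: c c')
  case (Leaf x) then show ?case by simp
next
  case (Tens A B)
  have h1: "\<forall>r. \<phi> ((c@[False])@r) = (c'@[False])@r" "\<forall>r. \<phi> ((c@[True])@r) = (c'@[True])@r"
    using Tens.prems by simp_all
  have h0: "\<phi> c = c'" using spec[OF Tens.prems, of "[]"] by simp
  show ?case using Tens.IH(1)[OF h1(1)] Tens.IH(2)[OF h1(2)] h0
    by (simp add: image_Un)
next
  case (Par A B)
  have h1: "\<forall>r. \<phi> ((c@[False])@r) = (c'@[False])@r" "\<forall>r. \<phi> ((c@[True])@r) = (c'@[True])@r"
    using Par.prems by simp_all
  have h0: "\<phi> c = c'" using spec[OF Par.prems, of "[]"] by simp
  show ?case using Par.IH(1)[OF h1(1)] Par.IH(2)[OF h1(2)] h0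
    by (simp add: image_Un)
qed

lemma nmap_fix: "\<forall>q. \<not>(\<exists>r. q = c@r) \<longrightarrow> \<phi> q = q \<Longrightarrow> outside c n \<Longrightarrow> nmap \<phi> n = n"
  by (auto simp: nmap_def outside_def split: node.splits)

lemma ce_fix:
  assumes "\<forall>q. \<not>(\<exists>r. q = c@r) \<longrightarrow> \<phi> q = q" "\<phi> c = c"
  shows "tmap \<phi> ` ce [] t c = ce [] t c"
proof -
  have "tmap \<phi> x = x" if "x \<in> ce [] t c" for x
  proof -
    obtain u d v par where x: "x = (u,d,v,par)" by (cases x) auto
    from ce_out[of u d v par "[]" t c] that x
    have "outside c u" "v = PN c \<or> outside c v" by auto
    then show ?thesis using x nmap_fix[OF assms(1)] assms(2) by auto
  qed
  then show ?thesis by (simp add: image_cong)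
qed

lemma cn_fix:
  assumes "\<forall>q. \<not>(\<exists>r. q = c@r) \<longrightarrow> \<phi> q = q"
  shows "nmap \<phi> ` cn [] t c = cn [] t c"
proof -
  have "nmap \<phi> x = x" if "x \<in> cn [] t c" for x
    using cn_out[of x "[]" t c] that nmap_fix[OF assms(1)] by auto
  then show ?thesis by (simp add: image_cong)
qed



definition GE :: "('a,'l) form list \<Rightarrow> 'l tup set" where
  "GE \<Gamma> = {(GN k p, d, gnode \<Gamma> k (p @ [d]), False) | k p d A B.
        k < length \<Gamma> \<and> subtree_at (\<Gamma> ! k) p = Some (Tens A B)}
   \<union> {(GN k p, d, gnode \<Gamma> k (p @ [d]), True) | k p d A B.
        k < length \<Gamma> \<and> subtree_at (\<Gamma> ! k) p = Some (Par A B)}"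

definition GV :: "('a,'l) form list \<Rightarrow> 'l node set" where
  "GV \<Gamma> = {gnode \<Gamma> k p | k p. k < length \<Gamma> \<and> subtree_at (\<Gamma> ! k) p \<noteq> None}"

lemma pnode_cat: "pnode P q = cat [] P q"
  by (auto simp: pnode_def cat_def split: option.splits tr.splits)

lemma tedges_eq: fixes P :: "('a,'l) form" shows "tedges P \<Gamma> = led [] P \<union> GE \<Gamma>"
proof -
  have "{(PN p :: 'l node, d, pnode P (p @ [d]), False) | p d A B. subtree_at P p = Some (Tens A B)}
     \<union> {(PN p :: 'l node, d, pnode P (p @ [d]), True) | p d A B. subtree_at P p = Some (Par A B)} = led [] P"
  proof (rule set_eqI)
    fix x :: "'l tup"
    obtain u d v par where x: "x = (u,d,v,par)" by (cases x) auto
    have "x \<in> {(PN p :: 'l node, d, pnode P (p @ [d]), False) | p d A B. subtree_at P p = Some (Tens A B)}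
     \<union> {(PN p :: 'l node, d, pnode P (p @ [d]), True) | p d A B. subtree_at P p = Some (Par A B)} \<longleftrightarrow>
      (\<exists>q A B. u = PN q \<and> v = cat [] P (q@[d]) \<and>
       (subtree_at P q = Some (Tens A B) \<and> \<not>par \<or> subtree_at P q = Some (Par A B) \<and> par))"
      unfolding x pnode_cat by blast
    then show "x \<in> {(PN p :: 'l node, d, pnode P (p @ [d]), False) | p d A B. subtree_at P p = Some (Tens A B)}
     \<union> {(PN p :: 'l node, d, pnode P (p @ [d]), True) | p d A B. subtree_at P p = Some (Par A B)} \<longleftrightarrow> x \<in> led [] P"
      unfolding x led_mem by simp
  qed
  then show ?thesis unfolding tedges_def GE_def by (simp only: Un_assoc)
qed

lemma vertices_eq: "vertices P \<Gamma> = lnodes [] P \<union> GV \<Gamma>"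
proof -
  have "{pnode P p | p. subtree_at P p \<noteq> None} = lnodes [] P"
    by (rule set_eqI) (auto simp: lnodes_mem pnode_cat)
  then show ?thesis unfolding vertices_def GV_def by blast
qed

lemma nmap_gnode: "nmap \<phi> (gnode \<Gamma> k q) = gnode \<Gamma> k q"
  by (auto simp: gnode_def nmap_def split: option.splits tr.splits)

lemma GE_fix: "tmap \<phi> ` GE \<Gamma> = GE \<Gamma>"
proof -
  have "tmap \<phi> x = x" if "x \<in> GE \<Gamma>" for x
    using that unfolding GE_def by (auto simp: nmap_gnode)
  then show ?thesis by (simp add: image_cong)
qed

lemma GV_fix: "nmap \<phi> ` GV \<Gamma> = GV \<Gamma>"
proof -
  have "nmap \<phi> x = x" if "x \<in> GV \<Gamma>" for x
    using that unfolding GV_def by (auto simp: nmap_gnode)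
  then show ?thesis by (simp add: image_cong)
qed


definition swE :: "'l tup set \<Rightarrow> ('l node \<Rightarrow> bool) \<Rightarrow> 'l node set set" where
  "swE T s = {{u, v} | u d v par. (u, d, v, par) \<in> T \<and> \<not> (par \<and> s u = d)}"

lemma sw_edges_eq: "sw_edges P \<Gamma> s = swE (tedges P \<Gamma>) s"
  by (simp add: sw_edges_def swE_def)

lemma swE_Un: "swE (A \<union> B) s = swE A s \<union> swE B s"
  unfolding swE_def by blast

lemma swE_empty[simp]: "swE {} s = {}"
  unfolding swE_def by blast

lemma swE_insert: "swE (insert (u,d,v,par) T) s = (if par \<and> s u = d then swE T s else insert {u,v} (swE T s))"
  unfolding swE_def by auto

lemma swE_mono: "A \<subseteq> B \<Longrightarrow> swE A s \<subseteq> swE B s"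
  unfolding swE_def by blast

lemma swE_cong: "\<forall>(u,d,v,par)\<in>T. par \<longrightarrow> s u = s' u \<Longrightarrow> swE T s = swE T s'"
  unfolding swE_def by fastforce

definition img :: "('v \<Rightarrow> 'w) \<Rightarrow> 'v set set \<Rightarrow> 'w set set" where
  "img f E = (\<lambda>e. f ` e) ` E"

lemma swE_tmap: "swE (tmap \<phi> ` T) s = img (nmap \<phi>) (swE T (s \<circ> nmap \<phi>))"
proof (rule set_eqI, rule iffI)
  fix e assume "e \<in> swE (tmap \<phi> ` T) s"
  then obtain u d v par where e: "e = {u,v}" "(u,d,v,par) \<in> tmap \<phi> ` T" "\<not>(par \<and> s u = d)"
    unfolding swE_def by blast
  from e(2) obtain u0 v0 where uv: "(u0,d,v0,par) \<in> T" "u = nmap \<phi> u0" "v = nmap \<phi> v0" by auto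
  then have "{u0,v0} \<in> swE T (s \<circ> nmap \<phi>)" using e(3) unfolding swE_def by auto
  moreover have "e = nmap \<phi> ` {u0,v0}" using e(1) uv by simp
  ultimately show "e \<in> img (nmap \<phi>) (swE T (s \<circ> nmap \<phi>))" unfolding img_def by blast
next
  fix e assume "e \<in> img (nmap \<phi>) (swE T (s \<circ> nmap \<phi>))"
  then obtain e0 where e0: "e0 \<in> swE T (s \<circ> nmap \<phi>)" "e = nmap \<phi> ` e0" unfolding img_def by blast
  then obtain u d v par where uv: "e0 = {u,v}" "(u,d,v,par) \<in> T" "\<not>(par \<and> s (nmap \<phi> u) = d)"
    unfolding swE_def by auto
  have "(nmap \<phi> u, d, nmap \<phi> v, par) \<in> tmap \<phi> ` T" using uv(2) by (rule image_eqI[rotated]) simp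
  moreover have "e = {nmap \<phi> u, nmap \<phi> v}" using e0(2) uv(1) by simp
  ultimately show "e \<in> swE (tmap \<phi> ` T) s" using uv(3) unfolding swE_def by blast
qed

lemma good_swE: assumes "\<forall>(u,d,v,par)\<in>T. u \<noteq> v" shows "good (swE T s)"
  unfolding good_def
proof
  fix e assume "e \<in> swE T s"
  then obtain u d v par where "e = {u,v}" "(u,d,v,par) \<in> T" unfolding swE_def by blast
  moreover then have "u \<noteq> v" using assms by fastforce
  ultimately show "\<exists>u v. u \<noteq> v \<and> e = {u,v}" by blast
qed

lemma tedges_ne: "\<forall>(u,d,v,par)\<in>tedges P \<Gamma>. u \<noteq> v"
proof
  fix x assume "x \<in> tedges P \<Gamma>"
  then consider "x \<in> led [] P" | "x \<in> GE \<Gamma>" unfolding tedges_eq by blast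
  then show "case x of (u,d,v,par) \<Rightarrow> u \<noteq> v"
  proof cases
    case 1
    obtain u d v par where x: "x = (u,d,v,par)" by (cases x) auto
    with 1 obtain q where "u = PN q" "v = cat [] P (q@[d])" unfolding x led_mem by blast
    moreover have "cat [] P (q@[d]) \<noteq> PN q" by (auto simp: cat_def split: option.splits tr.splits)
    ultimately show ?thesis using x by simp
  next
    case 2
    obtain u d v par where x: "x = (u,d,v,par)" by (cases x) auto
    from 2 obtain k p where "u = GN k p" "v = gnode \<Gamma> k (p@[d])" unfolding x GE_def by blast
    moreover have "gnode \<Gamma> k (p@[d]) \<noteq> GN k p" by (auto simp: gnode_def split: option.splits tr.splits)
    ultimately show ?thesis using x by simp
  qed
qed

lemma good_sw: "good (sw_edges P \<Gamma> s)"
  unfolding sw_edges_eq by (rule good_swE[OF tedges_ne])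

lemma correct_iff: "correct P \<Gamma> \<longleftrightarrow> pre_proof_graph P \<Gamma> \<and> (\<forall>s. tree (vertices P \<Gamma>) (sw_edges P \<Gamma> s))"
proof -
  have "gacyclic (sw_edges P \<Gamma> s) \<longleftrightarrow> brf (sw_edges P \<Gamma> s)" for s by (rule acyc_iff[OF good_sw])
  then show ?thesis unfolding correct_def tree_def by (simp add: good_sw)
qed


lemma adj_img: assumes i: "inj f" shows "adj (img f E) (f u) (f v) \<longleftrightarrow> adj E u v"
  unfolding adj_def img_def
proof
  assume "{f u, f v} \<in> (\<lambda>e. f ` e) ` E"
  then obtain e where e: "e \<in> E" "{f u, f v} = f ` e" by blast
  then have "f ` {u,v} = f ` e" by simp
  then have "{u,v} = e" using inj_image_eq_iff[OF i, of "{u,v}" e] by simp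
  with e show "{u,v} \<in> E" by simp
next
  assume "{u,v} \<in> E"
  then show "{f u, f v} \<in> (\<lambda>e. f ` e) ` E" by (rule image_eqI[rotated]) simp
qed

lemma adj_img_range: "adj (img f E) x y \<Longrightarrow> y \<in> range f"
proof -
  assume "adj (img f E) x y"
  then obtain e where e: "{x,y} = f ` e" unfolding adj_def img_def by blast
  have "y \<in> {x,y}" by simp
  then have "y \<in> f ` e" unfolding e .
  then show ?thesis by blast
qed

lemma reach_img1: "(adj E)\<^sup>*\<^sup>* u v \<Longrightarrow> inj f \<Longrightarrow> (adj (img f E))\<^sup>*\<^sup>* (f u) (f v)"
  by (induction rule: rtranclp_induct) (auto simp: adj_img intro: rtranclp.rtrancl_into_rtrancl)

lemma reach_img2: "(adj (img f E))\<^sup>*\<^sup>* x y \<Longrightarrow> inj f \<Longrightarrow> x = f u \<Longrightarrow> \<exists>v. y = f v \<and> (adj E)\<^sup>*\<^sup>* u v"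
proof (induction rule: rtranclp_induct)
  case base then show ?case by auto
next
  case (step y z)
  then obtain v where v: "y = f v" "(adj E)\<^sup>*\<^sup>* u v" by blast
  from adj_img_range[OF step.hyps(2)] obtain w where w: "z = f w" by blast
  have "adj E v w" using step.hyps(2) adj_img[OF step.prems(1)] v w by simp
  with v(2) have "(adj E)\<^sup>*\<^sup>* u w" by (rule rtranclp.rtrancl_into_rtrancl)
  with w show ?case by blast
qed

lemma reach_img: "inj f \<Longrightarrow> (adj (img f E))\<^sup>*\<^sup>* (f u) (f v) \<longleftrightarrow> (adj E)\<^sup>*\<^sup>* u v"
  using reach_img1 reach_img2 by (metis injD)

lemma img_diff: assumes i: "inj f" shows "img f E - {{f u, f v}} = img f (E - {{u,v}})"
proof -
  have eq: "f ` e = {f u, f v} \<longleftrightarrow> e = {u,v}" for e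
    using inj_image_eq_iff[OF i, of e "{u,v}"] by simp
  show ?thesis unfolding img_def using eq by blast
qed

lemma img_mem: "{x, y} \<in> img f E \<Longrightarrow> \<exists>u v. x = f u \<and> y = f v"
proof -
  assume "{x, y} \<in> img f E"
  then obtain e where "{x,y} = f ` e" unfolding img_def by blast
  then have "x \<in> f ` e" "y \<in> f ` e" by (metis insertI1, metis insertI1 insertI2)
  then show ?thesis by blast
qed

lemma tree_img:
  assumes i: "inj f"
  shows "tree (f ` V) (img f E) \<longleftrightarrow> tree V E"
proof -
  have gc: "gconnected (f ` V) (img f E) \<longleftrightarrow> gconnected V E"
  proof
    assume h: "gconnected (f ` V) (img f E)"
    show "gconnected V E" unfolding gconnected_def
    proof (intro ballI)
      fix u v assume "u \<in> V" "v \<in> V"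
      then have "(adj (img f E))\<^sup>*\<^sup>* (f u) (f v)" using h unfolding gconnected_def by blast
      then show "(adj E)\<^sup>*\<^sup>* u v" using reach_img[OF i] by blast
    qed
  next
    assume h: "gconnected V E"
    show "gconnected (f ` V) (img f E)" unfolding gconnected_def
    proof (intro ballI)
      fix x y assume "x \<in> f ` V" "y \<in> f ` V"
      then obtain u v where uv: "u \<in> V" "v \<in> V" "x = f u" "y = f v" by blast
      then have "(adj E)\<^sup>*\<^sup>* u v" using h unfolding gconnected_def by blast
      then show "(adj (img f E))\<^sup>*\<^sup>* x y" using reach_img[OF i] uv by blast
    qed
  qed
  have br: "brf (img f E) \<longleftrightarrow> brf E"
  proof
    assume b: "brf (img f E)"
    show "brf E" unfolding brf_def
    proof (intro allI impI)
      fix u v assume "{u,v} \<in> E"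
      then have "{f u, f v} \<in> img f E" using adj_img[OF i, of E u v] unfolding adj_def by simp
      with b have "\<not> (adj (img f E - {{f u, f v}}))\<^sup>*\<^sup>* (f u) (f v)" unfolding brf_def by blast
      then show "\<not> (adj (E - {{u,v}}))\<^sup>*\<^sup>* u v" unfolding img_diff[OF i] reach_img[OF i] .
    qed
  next
    assume b: "brf E"
    show "brf (img f E)" unfolding brf_def
    proof (intro allI impI)
      fix x y assume xy: "{x,y} \<in> img f E"
      then obtain u v where uv: "x = f u" "y = f v" using img_mem[OF xy] by blast
      with xy have "{u,v} \<in> E" using adj_img[OF i, of E u v] unfolding adj_def by simp
      with b have "\<not> (adj (E - {{u,v}}))\<^sup>*\<^sup>* u v" unfolding brf_def by blast
      then show "\<not> (adj (img f E - {{x,y}}))\<^sup>*\<^sup>* x y" unfolding uv img_diff[OF i] reach_img[OF i] .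
    qed
  qed
  have gd: "good (img f E) \<longleftrightarrow> good E"
  proof
    assume g: "good (img f E)"
    show "good E" unfolding good_def
    proof
      fix e assume e: "e \<in> E"
      then have fe: "f ` e \<in> img f E" unfolding img_def by (rule imageI)
      have "\<exists>a b. a \<noteq> b \<and> f ` e = {a,b}" using g fe unfolding good_def by (rule bspec)
      then obtain a b where ab: "a \<noteq> b" "f ` e = {a,b}" by blast
      then have "a \<in> f ` e" "b \<in> f ` e" by (simp_all add: ab(2))
      then obtain u v where "u \<in> e" "v \<in> e" "f u = a" "f v = b" by blast
      then have "f ` e = f ` {u,v}" using ab by simp
      then have "e = {u,v}" using inj_image_eq_iff[OF i, of e "{u,v}"] by simp
      moreover have "u \<noteq> v" using ab \<open>f u = a\<close> \<open>f v = b\<close> by auto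
      ultimately show "\<exists>u v. u \<noteq> v \<and> e = {u,v}" by blast
    qed
  next
    assume g: "good E"
    show "good (img f E)" unfolding good_def img_def
    proof
      fix e assume "e \<in> (\<lambda>e. f ` e) ` E"
      then obtain e0 where e0: "e0 \<in> E" "e = f ` e0" by blast
      have "\<exists>u v. u \<noteq> v \<and> e0 = {u,v}" using g e0(1) unfolding good_def by (rule bspec)
      then obtain u v where "u \<noteq> v" "e0 = {u,v}" by blast
      then show "\<exists>u v. u \<noteq> v \<and> e = {u,v}" using \<open>e = f ` e0\<close> i by (auto dest: injD)
    qed
  qed
  show ?thesis unfolding tree_def using gc br gd by blast
qed



lemma frame:
  assumes sub: "subtree_at P p = Some X" and nlY: "nonleaf Y"
    and fx1: "\<forall>q. \<not>(\<exists>r. q = p@r) \<longrightarrow> \<phi> q = q" and fx2: "\<phi> p = p"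
    and K: "tmap \<phi> ` K = led p Y" and KV: "nmap \<phi> ` lnodes p X = lnodes p Y"
  shows "tedges (replace_at P p Y) \<Gamma> = tmap \<phi> ` (ce [] P p \<union> K \<union> GE \<Gamma>)"
    "vertices (replace_at P p Y) \<Gamma> = nmap \<phi> ` vertices P \<Gamma>"
proof -
  have s': "subtree_at (replace_at P p Y) p = Some Y" by (rule subtree_replace[OF sub])
  have "tedges (replace_at P p Y) \<Gamma> = ce [] P p \<union> led p Y \<union> GE \<Gamma>"
    unfolding tedges_eq led_split[OF s' nlY] ce_replace[OF sub] by simp
  also have "\<dots> = tmap \<phi> ` (ce [] P p \<union> K \<union> GE \<Gamma>)"
    unfolding image_Un ce_fix[OF fx1 fx2] K GE_fix ..
  finally show "tedges (replace_at P p Y) \<Gamma> = tmap \<phi> ` (ce [] P p \<union> K \<union> GE \<Gamma>)" .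
  have "vertices (replace_at P p Y) \<Gamma> = cn [] P p \<union> lnodes p Y \<union> GV \<Gamma>"
    unfolding vertices_eq lnodes_split[OF s'] cn_replace[OF sub] by simp
  also have "\<dots> = nmap \<phi> ` (cn [] P p \<union> lnodes p X \<union> GV \<Gamma>)"
    unfolding image_Un cn_fix[OF fx1] KV GV_fix ..
  also have "cn [] P p \<union> lnodes p X \<union> GV \<Gamma> = vertices P \<Gamma>"
    unfolding vertices_eq lnodes_split[OF sub] by simp
  finally show "vertices (replace_at P p Y) \<Gamma> = nmap \<phi> ` vertices P \<Gamma>" .
qed

lemma tedges_split: "subtree_at P p = Some X \<Longrightarrow> nonleaf X \<Longrightarrow> tedges P \<Gamma> = ce [] P p \<union> led p X \<union> GE \<Gamma>"
  unfolding tedges_eq using led_split by fastforce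

lemma inj_nmap: "inj \<phi> \<Longrightarrow> inj (nmap \<phi>)"
  unfolding inj_def nmap_def by (auto split: node.splits)

lemma frame_tree:
  fixes P X Y :: "('a,'l) form"
  assumes sub: "subtree_at P p = Some X" and nlY: "nonleaf Y"
    and fx1: "\<forall>q. \<not>(\<exists>r. q = p@r) \<longrightarrow> \<phi> q = q" and fx2: "\<phi> p = p"
    and K: "tmap \<phi> ` K = led p Y" and KV: "nmap \<phi> ` lnodes p X = lnodes p Y"
    and i: "inj \<phi>"
  shows "(\<forall>s. tree (vertices (replace_at P p Y) \<Gamma>) (sw_edges (replace_at P p Y) \<Gamma> s))
     \<longleftrightarrow> (\<forall>s. tree (vertices P \<Gamma>) (swE (ce [] P p \<union> K \<union> GE \<Gamma>) s))"
proof -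
  note fr = frame[OF sub nlY fx1 fx2 K KV]
  have i2: "inj (nmap \<phi>)" by (rule inj_nmap[OF i])
  have eq: "tree (vertices (replace_at P p Y) \<Gamma>) (sw_edges (replace_at P p Y) \<Gamma> s)
     \<longleftrightarrow> tree (vertices P \<Gamma>) (swE (ce [] P p \<union> K \<union> GE \<Gamma>) (s \<circ> nmap \<phi>))" for s
    unfolding sw_edges_eq fr swE_tmap tree_img[OF i2] ..
  show ?thesis
  proof
    assume h: "\<forall>s. tree (vertices (replace_at P p Y) \<Gamma>) (sw_edges (replace_at P p Y) \<Gamma> s)"
    show "\<forall>s. tree (vertices P \<Gamma>) (swE (ce [] P p \<union> K \<union> GE \<Gamma>) s)"
    proof
      fix s :: "'l node \<Rightarrow> bool"
      have "(s \<circ> inv (nmap \<phi>)) \<circ> nmap \<phi> = s" by (simp add: fun_eq_iff inv_f_f[OF i2])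
      then show "tree (vertices P \<Gamma>) (swE (ce [] P p \<union> K \<union> GE \<Gamma>) s)"
        using h eq[of "s \<circ> inv (nmap \<phi>)"] by simp
    qed
  next
    assume "\<forall>s. tree (vertices P \<Gamma>) (swE (ce [] P p \<union> K \<union> GE \<Gamma>) s)"
    then show "\<forall>s. tree (vertices (replace_at P p Y) \<Gamma>) (sw_edges (replace_at P p Y) \<Gamma> s)"
      using eq by blast
  qed
qed

definition avoid :: "'l node \<Rightarrow> 'l tup set \<Rightarrow> bool" where
  "avoid n T \<longleftrightarrow> (\<forall>u d v par. (u,d,v,par) \<in> T \<longrightarrow> u \<noteq> n \<and> v \<noteq> n)"

lemma avoid_Un: "avoid n (A \<union> B) \<longleftrightarrow> avoid n A \<and> avoid n B"
  unfolding avoid_def by blast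

lemma avoid_led: "\<not> inside c n \<Longrightarrow> avoid n (led c t)"
  unfolding avoid_def using led_inside by metis

lemma avoid_swE: "avoid n T \<Longrightarrow> e \<in> swE T s \<Longrightarrow> n \<notin> e"
  unfolding avoid_def swE_def by blast

lemma ce_parent: "(u,d,v,par) \<in> ce b t p \<Longrightarrow> \<exists>q. u = PN q"
proof (induction b t p rule: ce.induct)
  case (3 b A B e p) then show ?case by (cases e) (auto simp: led_mem)
next
  case (4 b A B e p) then show ?case by (cases e) (auto simp: led_mem)
qed auto

lemma gnode_not_PN: "gnode \<Gamma> k q \<noteq> PN q'"
  by (auto simp: gnode_def split: option.splits tr.splits)

lemma GE_nodes: assumes "(u,d,v,par) \<in> GE \<Gamma>" shows "(\<exists>k q. u = GN k q) \<and> (\<forall>q. v \<noteq> PN q)"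
proof -
  from assms obtain k q where "u = GN k q" "v = gnode \<Gamma> k (q@[d])" unfolding GE_def by blast
  then show ?thesis by (simp add: gnode_not_PN)
qed

lemma fresh_O:
  assumes "avoid (PN (p@r)) B" "r \<noteq> []"
  shows "\<forall>e\<in>swE (ce [] P p \<union> GE \<Gamma> \<union> B) s. PN (p@r) \<notin> e"
proof -
  have "avoid (PN (p@r)) (ce [] P p)" unfolding avoid_def
  proof (intro allI impI)
    fix u d v par assume h: "(u,d,v,par) \<in> ce [] P p"
    from ce_out[OF h] have "outside p u" "v = PN p \<or> outside p v" by auto
    then show "u \<noteq> PN (p@r) \<and> v \<noteq> PN (p@r)" using assms(2) by (auto simp: outside_def)
  qed
  moreover have "avoid (PN (p@r)) (GE \<Gamma>)" unfolding avoid_def using GE_nodes by blast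
  ultimately have "avoid (PN (p@r)) (ce [] P p \<union> GE \<Gamma> \<union> B)" using assms(1) by (simp add: avoid_Un)
  then show ?thesis using avoid_swE by blast
qed

lemma root_O:
  assumes "avoid (PN p) B" "inside p z"
  shows "{PN p, z} \<notin> swE (ce [] P p \<union> GE \<Gamma> \<union> B) s"
proof
  assume "{PN p, z} \<in> swE (ce [] P p \<union> GE \<Gamma> \<union> B) s"
  then obtain u d v par where e: "{PN p, z} = {u,v}" and t: "(u,d,v,par) \<in> ce [] P p \<union> GE \<Gamma> \<union> B"
    unfolding swE_def by blast
  from t consider "(u,d,v,par) \<in> ce [] P p" | "(u,d,v,par) \<in> GE \<Gamma>" | "(u,d,v,par) \<in> B" by blast
  then show False
  proof cases
    case 1
    from ce_out[OF 1] ce_parent[OF 1] obtain q where "u = PN q" "outside p u" by auto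
    moreover have "u \<in> {PN p, z}" using e by blast
    ultimately show False using assms(2) by (auto simp: outside_def inside_def split: node.splits)
  next
    case 2
    from GE_nodes[OF 2] obtain k q where "u = GN k q" by blast
    moreover have "u \<in> {PN p, z}" using e by blast
    ultimately show False using assms(2) by (auto simp: inside_def)
  next
    case 3
    then have "u \<noteq> PN p" "v \<noteq> PN p" using assms(1) unfolding avoid_def by blast+
    moreover have "PN p \<in> {u,v}" using e by blast
    ultimately show False by blast
  qed
qed

lemma cong_O:
  assumes "\<forall>(u,d,v,par)\<in>B. par \<longrightarrow> s u = s' u"
    and "\<forall>q. \<not>(\<exists>r. q = p@r) \<longrightarrow> s (PN q) = s' (PN q)"
    and "\<forall>k q. s (GN k q) = s' (GN k q)"
  shows "swE (ce [] P p \<union> GE \<Gamma> \<union> B) s = swE (ce [] P p \<union> GE \<Gamma> \<union> B) s'"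
proof (rule swE_cong, clarify)
  fix u d v par assume t: "(u,d,v,par) \<in> ce [] P p \<union> GE \<Gamma> \<union> B" and "par"
  from t consider "(u,d,v,par) \<in> ce [] P p" | "(u,d,v,par) \<in> GE \<Gamma>" | "(u,d,v,par) \<in> B" by blast
  then show "s u = s' u"
  proof cases
    case 1
    from ce_out[OF 1] ce_parent[OF 1] obtain q where "u = PN q" "outside p u" by auto
    then show ?thesis using assms(2) by (auto simp: outside_def)
  next
    case 2
    from GE_nodes[OF 2] obtain k q where "u = GN k q" by blast
    then show ?thesis using assms(3) by simp
  next
    case 3 then show ?thesis using assms(1) \<open>par\<close> by fastforce
  qed
qed



lemma nd_cases: "nd c t = PN c \<or> (\<exists>l. nd c t = LN l)"
  by (cases t) auto

lemma nd_in: "nd c t \<in> lnodes c t"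
  by (cases t) auto

lemma inside_app: "inside (c@r) n \<Longrightarrow> inside c n"
  by (auto simp: inside_def split: node.splits)

lemma inside_nd': "inside (c@r) (nd (c@r) t)"
  by (rule inside_nd)

lemma lnodes_sub_V: "subtree_at P p = Some X \<Longrightarrow> lnodes p X \<subseteq> vertices P \<Gamma>"
  unfolding vertices_eq using lnodes_split[of P p X "[]"] by auto

lemma not_inside_PN: "\<not> (\<exists>r. q = c@r) \<Longrightarrow> \<not> inside c (PN q)"
  by (simp add: inside_def)

definition phA :: "bool list \<Rightarrow> bool list \<Rightarrow> bool list" where
  "phA p q = (if \<exists>r. q = p@[False,False]@r then p@[False]@drop (length p + 2) q
     else if \<exists>r. q = p@[False,True]@r then p@[True,False]@drop (length p + 2) q
     else if q = p@[False] then p@[True]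
     else if \<exists>r. q = p@[True]@r then p@[True,True]@drop (length p + 1) q
     else q)"

lemma phA_inj: "inj (phA p)"
proof (rule injI)
  fix q1 q2 assume "phA p q1 = phA p q2"
  then show "q1 = q2" unfolding phA_def
    by (auto split: if_splits) (metis (full_types) list.exhaust)+
qed

lemma assoc_case:
  fixes P Q R S :: "('a,'l) form"
  assumes sub: "subtree_at P p = Some (Par (Par Q R) S)"
  shows "(\<forall>s. tree (vertices (replace_at P p (Par Q (Par R S))) \<Gamma>) (sw_edges (replace_at P p (Par Q (Par R S))) \<Gamma> s))
     \<longleftrightarrow> (\<forall>s. tree (vertices P \<Gamma>) (sw_edges P \<Gamma> s))"
proof -
  define x :: "'l node" where "x = PN p"
  define y :: "'l node" where "y = PN (p@[False])"
  define a where "a = nd (p@[False,False]) Q"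
  define b where "b = nd (p@[False,True]) R"
  define c where "c = nd (p@[True]) S"
  define B where "B = led (p@[False,False]) Q \<union> led (p@[False,True]) R \<union> led (p@[True]) S"
  define K where "K = {(x,False,a,True),(x,True,y,True),(y,False,b,True),(y,True,c,True)} \<union> B"
  define V where "V = vertices P \<Gamma>"
  have ledX: "led p (Par (Par Q R) S) = {(x,False,y,True),(x,True,c,True),(y,False,a,True),(y,True,b,True)} \<union> B"
    unfolding x_def y_def a_def b_def c_def B_def by auto
  have fx1: "\<forall>q. \<not>(\<exists>r. q = p@r) \<longrightarrow> phA p q = q" unfolding phA_def by auto
  have fx2: "phA p p = p" unfolding phA_def by auto
  have sh1: "\<forall>r. phA p ((p@[False,False])@r) = (p@[False])@r" unfolding phA_def by simp
  have sh2: "\<forall>r. phA p ((p@[False,True])@r) = (p@[True,False])@r" unfolding phA_def by simp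
  have sh3: "\<forall>r. phA p ((p@[True])@r) = (p@[True,True])@r" unfolding phA_def by simp
  have y': "nmap (phA p) y = PN (p@[True])" unfolding y_def phA_def by simp
  have x': "nmap (phA p) x = x" unfolding x_def using fx2 by simp
  have KK: "tmap (phA p) ` K = led p (Par Q (Par R S))"
    unfolding K_def B_def image_Un led_shift[OF sh1] led_shift[OF sh2] led_shift[OF sh3]
    using x' y' nd_shift[OF sh1, of Q] nd_shift[OF sh2, of R] nd_shift[OF sh3, of S]
    unfolding a_def b_def c_def x_def by auto
  have KV: "nmap (phA p) ` lnodes p (Par (Par Q R) S) = lnodes p (Par Q (Par R S))"
    using lnodes_shift[OF sh1, of Q] lnodes_shift[OF sh2, of R] lnodes_shift[OF sh3, of S] fx2
      y'[unfolded y_def] by (simp add: image_Un) blast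
  have nlY: "nonleaf (Par Q (Par R S))" by (simp add: nonleaf_def)
  have nlX: "nonleaf (Par (Par Q R) S)" by (simp add: nonleaf_def)
  note FT = frame_tree[OF sub nlY fx1 fx2 KK KV phA_inj]
  define Ob where "Ob s = swE (ce [] P p \<union> GE \<Gamma> \<union> B) s" for s
  have eqP: "sw_edges P \<Gamma> s = Ob s \<union> {if s x then {x,y} else {x,c}, if s y then {y,a} else {y,b}}" for s
  proof -
    have "ce [] P p \<union> ({(x,False,y,True),(x,True,c,True),(y,False,a,True),(y,True,b,True)} \<union> B) \<union> GE \<Gamma>
      = (ce [] P p \<union> GE \<Gamma> \<union> B) \<union> {(x,False,y,True),(x,True,c,True),(y,False,a,True),(y,True,b,True)}" by blast
    then show ?thesis unfolding sw_edges_eq tedges_split[OF sub nlX] ledX Ob_def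
      by (simp only: swE_Un) (cases "s x"; cases "s y"; simp add: swE_insert)
  qed
  have eqK: "swE (ce [] P p \<union> K \<union> GE \<Gamma>) s = Ob s \<union> {if s x then {x,a} else {x,y}, if s y then {y,b} else {y,c}}" for s
  proof -
    have "ce [] P p \<union> K \<union> GE \<Gamma>
      = (ce [] P p \<union> GE \<Gamma> \<union> B) \<union> {(x,False,a,True),(x,True,y,True),(y,False,b,True),(y,True,c,True)}"
      unfolding K_def by blast
    then show ?thesis unfolding Ob_def
      by (simp only: swE_Un) (cases "s x"; cases "s y"; simp add: swE_insert)
  qed
  have avx: "avoid x B" unfolding B_def avoid_Un x_def
    by (intro conjI avoid_led not_inside_PN) auto
  have avy: "avoid y B" unfolding B_def avoid_Un y_def
    by (intro conjI avoid_led not_inside_PN) auto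
  have Ocong: "Ob (s(x := \<alpha>, y := \<beta>)) = Ob s" for s \<alpha> \<beta>
    unfolding Ob_def
  proof (rule cong_O)
    show "\<forall>(u,d,v,par)\<in>B. par \<longrightarrow> (s(x := \<alpha>, y := \<beta>)) u = s u"
    proof (clarify)
      fix u d v par assume "(u,d,v,par) \<in> B"
      then have "u \<noteq> x" "u \<noteq> y" using avx avy unfolding avoid_def by blast+
      then show "(s(x := \<alpha>, y := \<beta>)) u = s u" by simp
    qed
    show "\<forall>q. \<not>(\<exists>r. q = p@r) \<longrightarrow> (s(x := \<alpha>, y := \<beta>)) (PN q) = s (PN q)"
      unfolding x_def y_def by auto
    show "\<forall>k q. (s(x := \<alpha>, y := \<beta>)) (GN k q) = s (GN k q)"
      unfolding x_def y_def by auto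
  qed
  have fy: "\<forall>e\<in>Ob s. y \<notin> e" for s
    unfolding Ob_def y_def by (rule fresh_O) (use avy in \<open>simp_all add: y_def\<close>)
  have ins: "inside p a" "inside p b" "inside p c"
    unfolding a_def b_def c_def using inside_nd inside_app by blast+
  have fx: "\<forall>z\<in>{a,b,c}. {x,z} \<notin> Ob s" for s
    unfolding Ob_def x_def using root_O[OF avx[unfolded x_def]] ins by blast
  have d: "x \<noteq> y" "a \<noteq> y" "b \<noteq> y" "c \<noteq> y" "x \<noteq> a" "x \<noteq> b" "x \<noteq> c"
    using nd_cases[of "p@[False,False]" Q] nd_cases[of "p@[False,True]" R] nd_cases[of "p@[True]" S]
    unfolding x_def y_def a_def b_def c_def by auto
  have VV: "x \<in> V" "a \<in> V" "b \<in> V" "c \<in> V"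
    using lnodes_sub_V[OF sub, of \<Gamma>] nd_in[of "p@[False,False]" Q] nd_in[of "p@[False,True]" R] nd_in[of "p@[True]" S]
    unfolding V_def x_def a_def b_def c_def by auto
  have xy: "x \<noteq> y" by (rule d(1))
  show ?thesis
  proof
    assume h: "\<forall>s. tree (vertices (replace_at P p (Par Q (Par R S))) \<Gamma>) (sw_edges (replace_at P p (Par Q (Par R S))) \<Gamma> s)"
    have hK: "tree V (Ob s \<union> {if s x then {x,a} else {x,y}, if s y then {y,b} else {y,c}})" for s
      using h FT eqK V_def by simp
    show "\<forall>s. tree (vertices P \<Gamma>) (sw_edges P \<Gamma> s)"
    proof
      fix s
      have U: "tree V (Ob s \<union> {if \<alpha> then {x,a} else {x,y}, if \<beta> then {y,b} else {y,c}})" for \<alpha> \<beta>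
        using hK[of "s(x := \<alpha>, y := \<beta>)"] xy Ocong by simp
      note C = core_assoc_bwd[OF U[of True True, unfolded if_True if_False] U[of True False, unfolded if_True if_False] U[of False True, unfolded if_True if_False] U[of False False, unfolded if_True if_False]
          fy[of s] fx[of s] d VV(1) VV(3) VV(4)]
      show "tree (vertices P \<Gamma>) (sw_edges P \<Gamma> s)"
        unfolding eqP V_def[symmetric] using C by (cases "s x"; cases "s y") simp_all
    qed
  next
    assume h: "\<forall>s. tree (vertices P \<Gamma>) (sw_edges P \<Gamma> s)"
    have hX: "tree V (Ob s \<union> {if s x then {x,y} else {x,c}, if s y then {y,a} else {y,b}})" for s
      using h eqP V_def by simp
    have "\<forall>s. tree V (swE (ce [] P p \<union> K \<union> GE \<Gamma>) s)"
    proof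
      fix s
      have U: "tree V (Ob s \<union> {if \<alpha> then {x,y} else {x,c}, if \<beta> then {y,a} else {y,b}})" for \<alpha> \<beta>
        using hX[of "s(x := \<alpha>, y := \<beta>)"] xy Ocong by simp
      note C = core_assoc_fwd[OF U[of True True, unfolded if_True if_False] U[of True False, unfolded if_True if_False] U[of False True, unfolded if_True if_False] U[of False False, unfolded if_True if_False]
          fy[of s] fx[of s] d VV(1) VV(2) VV(3)]
      show "tree V (swE (ce [] P p \<union> K \<union> GE \<Gamma>) s)"
        unfolding eqK using C by (cases "s x"; cases "s y") simp_all
    qed
    then show "\<forall>s. tree (vertices (replace_at P p (Par Q (Par R S))) \<Gamma>) (sw_edges (replace_at P p (Par Q (Par R S))) \<Gamma> s)"
      using FT V_def by simp
  qed
qed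


definition phC :: "bool list \<Rightarrow> bool list \<Rightarrow> bool list" where
  "phC p q = (if \<exists>r. q = p@[False]@r then p@[True]@drop (length p + 1) q
     else if \<exists>r. q = p@[True]@r then p@[False]@drop (length p + 1) q
     else q)"

lemma phC_inj: "inj (phC p)"
proof (rule injI)
  fix q1 q2 assume "phC p q1 = phC p q2"
  then show "q1 = q2" unfolding phC_def
    by (auto split: if_splits)
qed

lemma comm_case:
  fixes P Q R :: "('a,'l) form"
  assumes sub: "subtree_at P p = Some (Par Q R)"
  shows "(\<forall>s. tree (vertices (replace_at P p (Par R Q)) \<Gamma>) (sw_edges (replace_at P p (Par R Q)) \<Gamma> s))
     \<longleftrightarrow> (\<forall>s. tree (vertices P \<Gamma>) (sw_edges P \<Gamma> s))"
proof -
  define x :: "'l node" where "x = PN p"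
  define a where "a = nd (p@[False]) Q"
  define b where "b = nd (p@[True]) R"
  define B where "B = led (p@[False]) Q \<union> led (p@[True]) R"
  define K where "K = {(x,True,a,True),(x,False,b,True)} \<union> B"
  define V where "V = vertices P \<Gamma>"
  have ledX: "led p (Par Q R) = {(x,False,a,True),(x,True,b,True)} \<union> B"
    unfolding x_def a_def b_def B_def by auto
  have fx1: "\<forall>q. \<not>(\<exists>r. q = p@r) \<longrightarrow> phC p q = q" unfolding phC_def by auto
  have fx2: "phC p p = p" unfolding phC_def by auto
  have sh1: "\<forall>r. phC p ((p@[False])@r) = (p@[True])@r" unfolding phC_def by simp
  have sh2: "\<forall>r. phC p ((p@[True])@r) = (p@[False])@r" unfolding phC_def by simp
  have x': "nmap (phC p) x = x" unfolding x_def using fx2 by simp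
  have KK: "tmap (phC p) ` K = led p (Par R Q)"
    unfolding K_def B_def image_Un led_shift[OF sh1] led_shift[OF sh2]
    using x' nd_shift[OF sh1, of Q] nd_shift[OF sh2, of R]
    unfolding a_def b_def x_def by auto
  have KV: "nmap (phC p) ` lnodes p (Par Q R) = lnodes p (Par R Q)"
    using lnodes_shift[OF sh1, of Q] lnodes_shift[OF sh2, of R] fx2
    by (simp add: image_Un) blast
  have nlY: "nonleaf (Par R Q)" by (simp add: nonleaf_def)
  have nlX: "nonleaf (Par Q R)" by (simp add: nonleaf_def)
  note FT = frame_tree[OF sub nlY fx1 fx2 KK KV phC_inj]
  define Ob where "Ob s = swE (ce [] P p \<union> GE \<Gamma> \<union> B) s" for s
  have eqP: "sw_edges P \<Gamma> s = Ob s \<union> {if s x then {x,a} else {x,b}}" for s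
  proof -
    have "ce [] P p \<union> ({(x,False,a,True),(x,True,b,True)} \<union> B) \<union> GE \<Gamma>
      = (ce [] P p \<union> GE \<Gamma> \<union> B) \<union> {(x,False,a,True),(x,True,b,True)}" by blast
    then show ?thesis unfolding sw_edges_eq tedges_split[OF sub nlX] ledX Ob_def
      by (simp only: swE_Un) (cases "s x"; simp add: swE_insert)
  qed
  have eqK: "swE (ce [] P p \<union> K \<union> GE \<Gamma>) s = Ob s \<union> {if s x then {x,b} else {x,a}}" for s
  proof -
    have "ce [] P p \<union> K \<union> GE \<Gamma> = (ce [] P p \<union> GE \<Gamma> \<union> B) \<union> {(x,True,a,True),(x,False,b,True)}"
      unfolding K_def by blast
    then show ?thesis unfolding Ob_def
      by (simp only: swE_Un) (cases "s x"; simp add: swE_insert)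
  qed
  have avx: "avoid x B" unfolding B_def avoid_Un x_def
    by (intro conjI avoid_led not_inside_PN) auto
  have Ocong: "Ob (s(x := \<alpha>)) = Ob s" for s \<alpha>
    unfolding Ob_def
  proof (rule cong_O)
    show "\<forall>(u,d,v,par)\<in>B. par \<longrightarrow> (s(x := \<alpha>)) u = s u"
    proof (clarify)
      fix u d v par assume "(u,d,v,par) \<in> B"
      then have "u \<noteq> x" using avx unfolding avoid_def by blast
      then show "(s(x := \<alpha>)) u = s u" by simp
    qed
    show "\<forall>q. \<not>(\<exists>r. q = p@r) \<longrightarrow> (s(x := \<alpha>)) (PN q) = s (PN q)"
      unfolding x_def by auto
    show "\<forall>k q. (s(x := \<alpha>)) (GN k q) = s (GN k q)"
      unfolding x_def by auto
  qed
  have sw: "Ob s \<union> {if s x then {x,b} else {x,a}} = Ob (s(x := \<not> s x)) \<union> {if (s(x := \<not> s x)) x then {x,a} else {x,b}}" for s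
    using Ocong by simp
  have sw2: "Ob s \<union> {if s x then {x,a} else {x,b}} = Ob (s(x := \<not> s x)) \<union> {if (s(x := \<not> s x)) x then {x,b} else {x,a}}" for s
    using Ocong by simp
  show ?thesis
  proof
    assume h: "\<forall>s. tree (vertices (replace_at P p (Par R Q)) \<Gamma>) (sw_edges (replace_at P p (Par R Q)) \<Gamma> s)"
    have hK: "tree V (Ob s \<union> {if s x then {x,b} else {x,a}})" for s
      using h FT eqK V_def by simp
    show "\<forall>s. tree (vertices P \<Gamma>) (sw_edges P \<Gamma> s)"
      unfolding eqP V_def[symmetric] sw2 using hK by blast
  next
    assume h: "\<forall>s. tree (vertices P \<Gamma>) (sw_edges P \<Gamma> s)"
    have hX: "tree V (Ob s \<union> {if s x then {x,a} else {x,b}})" for s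
      using h eqP V_def by simp
    have "\<forall>s. tree V (swE (ce [] P p \<union> K \<union> GE \<Gamma>) s)"
      unfolding eqK sw using hX by blast
    then show "\<forall>s. tree (vertices (replace_at P p (Par R Q)) \<Gamma>) (sw_edges (replace_at P p (Par R Q)) \<Gamma> s)"
      using FT V_def by simp
  qed
qed

lemma tens_comm_case:
  fixes P Q R :: "('a,'l) form"
  assumes sub: "subtree_at P p = Some (Tens Q R)"
  shows "(\<forall>s. tree (vertices (replace_at P p (Tens R Q)) \<Gamma>) (sw_edges (replace_at P p (Tens R Q)) \<Gamma> s))
     \<longleftrightarrow> (\<forall>s. tree (vertices P \<Gamma>) (sw_edges P \<Gamma> s))"
proof -
  define x :: "'l node" where "x = PN p"
  define a where "a = nd (p@[False]) Q"
  define b where "b = nd (p@[True]) R"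
  define B where "B = led (p@[False]) Q \<union> led (p@[True]) R"
  define K where "K = {(x,True,a,False),(x,False,b,False)} \<union> B"
  have ledX: "led p (Tens Q R) = {(x,False,a,False),(x,True,b,False)} \<union> B"
    unfolding x_def a_def b_def B_def by auto
  have fx1: "\<forall>q. \<not>(\<exists>r. q = p@r) \<longrightarrow> phC p q = q" unfolding phC_def by auto
  have fx2: "phC p p = p" unfolding phC_def by auto
  have sh1: "\<forall>r. phC p ((p@[False])@r) = (p@[True])@r" unfolding phC_def by simp
  have sh2: "\<forall>r. phC p ((p@[True])@r) = (p@[False])@r" unfolding phC_def by simp
  have x': "nmap (phC p) x = x" unfolding x_def using fx2 by simp
  have KK: "tmap (phC p) ` K = led p (Tens R Q)"
    unfolding K_def B_def image_Un led_shift[OF sh1] led_shift[OF sh2]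
    using x' nd_shift[OF sh1, of Q] nd_shift[OF sh2, of R]
    unfolding a_def b_def x_def by auto
  have KV: "nmap (phC p) ` lnodes p (Tens Q R) = lnodes p (Tens R Q)"
    using lnodes_shift[OF sh1, of Q] lnodes_shift[OF sh2, of R] fx2
    by (simp add: image_Un) blast
  have nlY: "nonleaf (Tens R Q)" by (simp add: nonleaf_def)
  have nlX: "nonleaf (Tens Q R)" by (simp add: nonleaf_def)
  note FT = frame_tree[OF sub nlY fx1 fx2 KK KV phC_inj]
  have eq: "sw_edges P \<Gamma> s = swE (ce [] P p \<union> K \<union> GE \<Gamma>) s" for s
  proof -
    have "ce [] P p \<union> ({(x,False,a,False),(x,True,b,False)} \<union> B) \<union> GE \<Gamma>
      = (ce [] P p \<union> GE \<Gamma> \<union> B) \<union> {(x,False,a,False),(x,True,b,False)}" by blast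
    moreover have "ce [] P p \<union> K \<union> GE \<Gamma> = (ce [] P p \<union> GE \<Gamma> \<union> B) \<union> {(x,True,a,False),(x,False,b,False)}"
      unfolding K_def by blast
    ultimately show ?thesis unfolding sw_edges_eq tedges_split[OF sub nlX] ledX
      by (simp only: swE_Un) (simp add: swE_insert insert_commute)
  qed
  show ?thesis using FT eq by simp
qed



lemma leaf_in_leaves: "subtree_at t r = Some (Leaf x) \<Longrightarrow> x \<in> set (leaves t)"
  by (induction t r rule: subtree_at.induct) (auto split: if_splits)

lemma leaf_pos_unique:
  "distinct (map lbl (leaves t)) \<Longrightarrow> subtree_at t r1 = Some (Leaf x1) \<Longrightarrow> subtree_at t r2 = Some (Leaf x2)
   \<Longrightarrow> lbl x1 = lbl x2 \<Longrightarrow> r1 = r2"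
proof (induction t arbitrary: r1 r2)
  case (Leaf x)
  then show ?case by (cases r1; cases r2) auto
next
  case (Tens A B)
  show ?case
  proof (cases r1)
    case Nil then show ?thesis using Tens.prems by simp
  next
    case (Cons d1 r1')
    show ?thesis
    proof (cases r2)
      case Nil then show ?thesis using Tens.prems by simp
    next
      case (Cons d2 r2')
      have dA: "distinct (map lbl (leaves A))" and dB: "distinct (map lbl (leaves B))"
        and dj: "lbl ` set (leaves A) \<inter> lbl ` set (leaves B) = {}" using Tens.prems(1) by auto
      show ?thesis
      proof (cases "d1 = d2")
        case True
        then show ?thesis using Tens.IH dA dB Tens.prems \<open>r1 = d1 # r1'\<close> Cons by (cases d1) auto
      next
        case False
        have s1: "subtree_at (if d1 then B else A) r1' = Some (Leaf x1)" using Tens.prems(2) \<open>r1 = d1 # r1'\<close> by simp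
        have s2: "subtree_at (if d2 then B else A) r2' = Some (Leaf x2)" using Tens.prems(3) Cons by simp
        have m1: "x1 \<in> set (leaves (if d1 then B else A))" by (rule leaf_in_leaves[OF s1])
        have m2: "x2 \<in> set (leaves (if d2 then B else A))" by (rule leaf_in_leaves[OF s2])
        have "lbl x1 \<in> lbl ` set (leaves (if d1 then B else A))" "lbl x2 \<in> lbl ` set (leaves (if d2 then B else A))"
          using m1 m2 by auto
        then show ?thesis using dj Tens.prems(4) False by (cases d1; cases d2) auto
      qed
    qed
  qed
next
  case (Par A B)
  show ?case
  proof (cases r1)
    case Nil then show ?thesis using Par.prems by simp
  next
    case (Cons d1 r1')
    show ?thesis
    proof (cases r2)
      case Nil then show ?thesis using Par.prems by simp
    next
      case (Cons d2 r2')
      have dA: "distinct (map lbl (leaves A))" and dB: "distinct (map lbl (leaves B))"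
        and dj: "lbl ` set (leaves A) \<inter> lbl ` set (leaves B) = {}" using Par.prems(1) by auto
      show ?thesis
      proof (cases "d1 = d2")
        case True
        then show ?thesis using Par.IH dA dB Par.prems \<open>r1 = d1 # r1'\<close> Cons by (cases d1) auto
      next
        case False
        have s1: "subtree_at (if d1 then B else A) r1' = Some (Leaf x1)" using Par.prems(2) \<open>r1 = d1 # r1'\<close> by simp
        have s2: "subtree_at (if d2 then B else A) r2' = Some (Leaf x2)" using Par.prems(3) Cons by simp
        have m1: "x1 \<in> set (leaves (if d1 then B else A))" by (rule leaf_in_leaves[OF s1])
        have m2: "x2 \<in> set (leaves (if d2 then B else A))" by (rule leaf_in_leaves[OF s2])
        have "lbl x1 \<in> lbl ` set (leaves (if d1 then B else A))" "lbl x2 \<in> lbl ` set (leaves (if d2 then B else A))"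
          using m1 m2 by auto
        then show ?thesis using dj Par.prems(4) False by (cases d1; cases d2) auto
      qed
    qed
  qed
qed

lemma sub_leaves: "subtree_at t p = Some X \<Longrightarrow> \<exists>ys zs. leaves t = ys @ leaves X @ zs"
proof (induction t p rule: subtree_at.induct)
  case (3 A B d p)
  then obtain ys zs where yz: "leaves (if d then B else A) = ys @ leaves X @ zs" by auto
  show ?case
  proof (cases d)
    case True then show ?thesis using yz by (intro exI[of _ "leaves A @ ys"] exI[of _ zs]) simp
  next
    case False then show ?thesis using yz by (intro exI[of _ ys] exI[of _ "zs @ leaves B"]) simp
  qed
next
  case (4 A B d p)
  then obtain ys zs where yz: "leaves (if d then B else A) = ys @ leaves X @ zs" by auto
  show ?case
  proof (cases d)
    case True then show ?thesis using yz by (intro exI[of _ "leaves A @ ys"] exI[of _ zs]) simp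
  next
    case False then show ?thesis using yz by (intro exI[of _ ys] exI[of _ "zs @ leaves B"]) simp
  qed
qed (auto intro: exI[of _ "[]"])

lemma distinct_sub: "distinct (map lbl (leaves t)) \<Longrightarrow> subtree_at t p = Some X \<Longrightarrow> distinct (map lbl (leaves X))"
  using sub_leaves by fastforce

lemma nd_LN: "nd c A = LN l \<Longrightarrow> l \<in> lbl ` set (leaves A)"
  by (cases A) auto

lemma cat_sub: "subtree_at t q = Some Z \<Longrightarrow> cat b t q = nd (b@q) Z"
  by (cases Z) (auto simp: cat_def)

lemma sub_app: "subtree_at t p = Some X \<Longrightarrow> subtree_at t (p@r) = subtree_at X r"
  by (induction t p rule: subtree_at.induct) auto

lemma led_LN_unique:
  assumes d: "distinct (map lbl (leaves t))"
    and h1: "(u1,d1,LN l,p1) \<in> led b t" and h2: "(u2,d2,LN l,p2) \<in> led b t"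
  shows "u1 = u2"
proof -
  from h1 obtain q1 where q1: "u1 = PN (b@q1)" "LN l = cat b t (q1@[d1])" unfolding led_mem by blast
  from h2 obtain q2 where q2: "u2 = PN (b@q2)" "LN l = cat b t (q2@[d2])" unfolding led_mem by blast
  from q1(2) obtain x1 where x1: "subtree_at t (q1@[d1]) = Some (Leaf x1)" "lbl x1 = l"
    unfolding cat_def by (auto split: option.splits tr.splits)
  from q2(2) obtain x2 where x2: "subtree_at t (q2@[d2]) = Some (Leaf x2)" "lbl x2 = l"
    unfolding cat_def by (auto split: option.splits tr.splits)
  have "q1@[d1] = q2@[d2]" using leaf_pos_unique[OF d x1(1) x2(1)] x1 x2 by simp
  then show ?thesis using q1 q2 by simp
qed


definition phBA :: "bool list \<Rightarrow> bool list \<Rightarrow> bool list" where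
  "phBA p q = (if \<exists>r. q = p@[True,False]@r then p@[False,True]@drop (length p + 2) q
     else if \<exists>r. q = p@[True,True]@r then p@[True]@drop (length p + 2) q
     else if q = p@[True] then p@[False]
     else if \<exists>r. q = p@[False]@r then p@[False,False]@drop (length p + 1) q
     else q)"

lemma phBA_inj: "inj (phBA p)"
proof (rule injI)
  fix q1 q2 assume "phBA p q1 = phBA p q2"
  then show "q1 = q2" unfolding phBA_def
    by (auto split: if_splits) (metis (full_types) list.exhaust)+
qed

lemma ba_case:
  fixes P Q :: "('a,'l) form"
  assumes sub: "subtree_at P p = Some (Tens (Leaf (Bot i)) (Tens Q (Leaf (Bot j))))"
    and dl: "distinct (map lbl (leaves P))"
  shows "(\<forall>s. tree (vertices (replace_at P p (Tens (Tens (Leaf (Bot i)) Q) (Leaf (Bot j)))) \<Gamma>)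
              (sw_edges (replace_at P p (Tens (Tens (Leaf (Bot i)) Q) (Leaf (Bot j)))) \<Gamma> s))
     \<longleftrightarrow> (\<forall>s. tree (vertices P \<Gamma>) (sw_edges P \<Gamma> s))"
proof -
  define x :: "'l node" where "x = PN p"
  define y :: "'l node" where "y = PN (p@[True])"
  define ti :: "'l node" where "ti = LN i"
  define tj :: "'l node" where "tj = LN j"
  define a where "a = nd (p@[True,False]) Q"
  define B where "B = led (p@[True,False]) Q"
  define K where "K = {(x,False,y,False),(x,True,tj,False),(y,False,ti,False),(y,True,a,False)} \<union> B"
  define V where "V = vertices P \<Gamma>"
  have ledX: "led p (Tens (Leaf (Bot i)) (Tens Q (Leaf (Bot j)))) = {(x,False,ti,False),(x,True,y,False),(y,False,a,False),(y,True,tj,False)} \<union> B"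
    unfolding x_def y_def a_def B_def ti_def tj_def by auto
  have fx1: "\<forall>q. \<not>(\<exists>r. q = p@r) \<longrightarrow> phBA p q = q" unfolding phBA_def by auto
  have fx2: "phBA p p = p" unfolding phBA_def by auto
  have sh1: "\<forall>r. phBA p ((p@[True,False])@r) = (p@[False,True])@r" unfolding phBA_def by simp
  have y': "nmap (phBA p) y = PN (p@[False])" unfolding y_def phBA_def by simp
  have x': "nmap (phBA p) x = x" unfolding x_def using fx2 by simp
  have KK: "tmap (phBA p) ` K = led p (Tens (Tens (Leaf (Bot i)) Q) (Leaf (Bot j)))"
    unfolding K_def B_def image_Un led_shift[OF sh1]
    using x' y' nd_shift[OF sh1, of Q]
    unfolding a_def x_def ti_def tj_def by auto
  have KV: "nmap (phBA p) ` lnodes p (Tens (Leaf (Bot i)) (Tens Q (Leaf (Bot j)))) = lnodes p (Tens (Tens (Leaf (Bot i)) Q) (Leaf (Bot j)))"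
    using lnodes_shift[OF sh1, of Q] fx2 y'[unfolded y_def] by (simp add: image_Un) blast
  have nlY: "nonleaf (Tens (Tens (Leaf (Bot i)) Q) (Leaf (Bot j)))" by (simp add: nonleaf_def)
  have nlX: "nonleaf (Tens (Leaf (Bot i)) (Tens Q (Leaf (Bot j))))" by (simp add: nonleaf_def)
  note FT = frame_tree[OF sub nlY fx1 fx2 KK KV phBA_inj]
  define Ob where "Ob s = swE (ce [] P p \<union> GE \<Gamma> \<union> B) s" for s
  have eqP: "sw_edges P \<Gamma> s = Ob s \<union> {{x,ti},{x,y},{y,a},{y,tj}}" for s
  proof -
    have "ce [] P p \<union> ({(x,False,ti,False),(x,True,y,False),(y,False,a,False),(y,True,tj,False)} \<union> B) \<union> GE \<Gamma>
      = (ce [] P p \<union> GE \<Gamma> \<union> B) \<union> {(x,False,ti,False),(x,True,y,False),(y,False,a,False),(y,True,tj,False)}" by blast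
    then show ?thesis unfolding sw_edges_eq tedges_split[OF sub nlX] ledX Ob_def
      by (simp only: swE_Un) (simp add: swE_insert)
  qed
  have eqK: "swE (ce [] P p \<union> K \<union> GE \<Gamma>) s = Ob s \<union> {{x,y},{x,tj},{y,ti},{y,a}}" for s
  proof -
    have "ce [] P p \<union> K \<union> GE \<Gamma>
      = (ce [] P p \<union> GE \<Gamma> \<union> B) \<union> {(x,False,y,False),(x,True,tj,False),(y,False,ti,False),(y,True,a,False)}"
      unfolding K_def by blast
    then show ?thesis unfolding Ob_def
      by (simp only: swE_Un) (simp add: swE_insert)
  qed
  have avx: "avoid x B" unfolding B_def x_def
    by (intro conjI avoid_led not_inside_PN) auto
  have avy: "avoid y B" unfolding B_def y_def
    by (intro conjI avoid_led not_inside_PN) auto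
  have fy: "\<forall>e\<in>Ob s. y \<notin> e" for s
    unfolding Ob_def y_def by (rule fresh_O) (use avy in \<open>simp_all add: y_def\<close>)
  have ins: "inside p ti" "inside p tj"
    unfolding ti_def tj_def by (simp_all add: inside_def)
  have fr: "\<forall>z\<in>{ti,tj}. {x,z} \<notin> Ob s" for s
    unfolding Ob_def x_def using root_O[OF avx[unfolded x_def]] ins by blast
  have dX: "distinct (map lbl (leaves (Tens (Leaf (Bot i)) (Tens Q (Leaf (Bot j))))))"
    by (rule distinct_sub[OF dl sub])
  then have lb: "i \<notin> lbl ` set (leaves Q)" "j \<notin> lbl ` set (leaves Q)" "i \<noteq> j" by auto
  have d: "x \<noteq> y" "x \<noteq> ti" "x \<noteq> a" "x \<noteq> tj" "y \<noteq> ti" "y \<noteq> a" "y \<noteq> tj" "ti \<noteq> a" "ti \<noteq> tj" "a \<noteq> tj"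
    using nd_cases[of "p@[True,False]" Q] lb nd_LN[of "p@[True,False]" Q]
    unfolding x_def y_def a_def ti_def tj_def by auto
  show ?thesis
  proof
    assume h: "\<forall>s. tree (vertices (replace_at P p (Tens (Tens (Leaf (Bot i)) Q) (Leaf (Bot j)))) \<Gamma>)
              (sw_edges (replace_at P p (Tens (Tens (Leaf (Bot i)) Q) (Leaf (Bot j)))) \<Gamma> s)"
    have hK: "tree V (Ob s \<union> {{x,y},{x,tj},{y,ti},{y,a}})" for s
      using h FT eqK V_def by simp
    show "\<forall>s. tree (vertices P \<Gamma>) (sw_edges P \<Gamma> s)"
      unfolding eqP V_def[symmetric] using core_ba_bwd[OF hK fy fr d] by blast
  next
    assume h: "\<forall>s. tree (vertices P \<Gamma>) (sw_edges P \<Gamma> s)"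
    have hX: "tree V (Ob s \<union> {{x,ti},{x,y},{y,a},{y,tj}})" for s
      using h eqP V_def by simp
    have "\<forall>s. tree V (swE (ce [] P p \<union> K \<union> GE \<Gamma>) s)"
      unfolding eqK using core_ba[OF hX fy fr d] by blast
    then show "\<forall>s. tree (vertices (replace_at P p (Tens (Tens (Leaf (Bot i)) Q) (Leaf (Bot j)))) \<Gamma>)
              (sw_edges (replace_at P p (Tens (Tens (Leaf (Bot i)) Q) (Leaf (Bot j)))) \<Gamma> s)"
      using FT V_def by simp
  qed
qed


definition phBS :: "bool list \<Rightarrow> bool list \<Rightarrow> bool list" where
  "phBS p q = (if \<exists>r. q = p@[False]@r then p@[False,False]@drop (length p + 1) q
     else if \<exists>r. q = p@[True,False]@r then p@[False,True]@drop (length p + 2) q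
     else if \<exists>r. q = p@[True,True]@r then p@[True]@drop (length p + 2) q
     else if q = p@[True] then p@[False]
     else q)"

lemma phBS_inj: "inj (phBS p)"
proof (rule injI)
  fix q1 q2 assume "phBS p q1 = phBS p q2"
  then show "q1 = q2" unfolding phBS_def
    by (auto split: if_splits; metis (full_types) list.exhaust)
qed

lemma bs_case:
  fixes P Q R :: "('a,'l) form"
  assumes sub: "subtree_at P p = Some (Par Q (Tens R (Leaf (Bot i))))"
    and dl: "distinct (map lbl (leaves P))"
  shows "(\<forall>s. tree (vertices (replace_at P p (Tens (Par Q R) (Leaf (Bot i)))) \<Gamma>)
              (sw_edges (replace_at P p (Tens (Par Q R) (Leaf (Bot i)))) \<Gamma> s))
     \<Longrightarrow> (\<forall>s. tree (vertices P \<Gamma>) (sw_edges P \<Gamma> s))"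
    and "(\<forall>s. tree (vertices P \<Gamma>) (sw_edges P \<Gamma> s)) \<Longrightarrow>
     (\<forall>s q. subtree_at P (p @ [False] @ q) \<noteq> None \<longrightarrow>
        \<not> (adj (ext_sw_edges P \<Gamma> s i))\<^sup>*\<^sup>* (pnode P (p @ [False] @ q)) (LN i)) \<Longrightarrow>
     (\<forall>s. tree (vertices (replace_at P p (Tens (Par Q R) (Leaf (Bot i)))) \<Gamma>)
              (sw_edges (replace_at P p (Tens (Par Q R) (Leaf (Bot i)))) \<Gamma> s))"
proof -
  define x :: "'l node" where "x = PN p"
  define y :: "'l node" where "y = PN (p@[True])"
  define t :: "'l node" where "t = LN i"
  define a where "a = nd (p@[False]) Q"
  define b where "b = nd (p@[True,False]) R"
  define B where "B = led (p@[False]) Q \<union> led (p@[True,False]) R"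
  define K where "K = {(x,False,y,False),(x,True,t,False),(y,False,a,True),(y,True,b,True)} \<union> B"
  define V where "V = vertices P \<Gamma>"
  have ledX: "led p (Par Q (Tens R (Leaf (Bot i)))) = {(x,False,a,True),(x,True,y,True),(y,False,b,False),(y,True,t,False)} \<union> B"
    unfolding x_def y_def a_def b_def B_def t_def by auto
  have fx1: "\<forall>q. \<not>(\<exists>r. q = p@r) \<longrightarrow> phBS p q = q" unfolding phBS_def by auto
  have fx2: "phBS p p = p" unfolding phBS_def by auto
  have sh1: "\<forall>r. phBS p ((p@[False])@r) = (p@[False,False])@r" unfolding phBS_def by simp
  have sh2: "\<forall>r. phBS p ((p@[True,False])@r) = (p@[False,True])@r" unfolding phBS_def by simp
  have y': "nmap (phBS p) y = PN (p@[False])" unfolding y_def phBS_def by simp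
  have x': "nmap (phBS p) x = x" unfolding x_def using fx2 by simp
  have KK: "tmap (phBS p) ` K = led p (Tens (Par Q R) (Leaf (Bot i)))"
    unfolding K_def B_def image_Un led_shift[OF sh1] led_shift[OF sh2]
    using x' y' nd_shift[OF sh1, of Q] nd_shift[OF sh2, of R]
    unfolding a_def b_def x_def t_def by auto
  have KV: "nmap (phBS p) ` lnodes p (Par Q (Tens R (Leaf (Bot i)))) = lnodes p (Tens (Par Q R) (Leaf (Bot i)))"
    using lnodes_shift[OF sh1, of Q] lnodes_shift[OF sh2, of R] fx2 y'[unfolded y_def] by (simp add: image_Un; blast)
  have nlY: "nonleaf (Tens (Par Q R) (Leaf (Bot i)))" by (simp add: nonleaf_def)
  have nlX: "nonleaf (Par Q (Tens R (Leaf (Bot i))))" by (simp add: nonleaf_def)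
  note FT = frame_tree[OF sub nlY fx1 fx2 KK KV phBS_inj]
  define Ob where "Ob s = swE (ce [] P p \<union> GE \<Gamma> \<union> B) s" for s
  have eqP: "sw_edges P \<Gamma> s = Ob s \<union> {if s x then {x,a} else {x,y}, {y,b}, {y,t}}" for s
  proof -
    have "ce [] P p \<union> ({(x,False,a,True),(x,True,y,True),(y,False,b,False),(y,True,t,False)} \<union> B) \<union> GE \<Gamma>
      = (ce [] P p \<union> GE \<Gamma> \<union> B) \<union> {(x,False,a,True),(x,True,y,True),(y,False,b,False),(y,True,t,False)}" by blast
    then show ?thesis unfolding sw_edges_eq tedges_split[OF sub nlX] ledX Ob_def
      by (simp only: swE_Un) (cases "s x"; simp add: swE_insert)
  qed
  have eqK: "swE (ce [] P p \<union> K \<union> GE \<Gamma>) s = Ob s \<union> {{x,y},{x,t}, if s y then {y,a} else {y,b}}" for s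
  proof -
    have "ce [] P p \<union> K \<union> GE \<Gamma>
      = (ce [] P p \<union> GE \<Gamma> \<union> B) \<union> {(x,False,y,False),(x,True,t,False),(y,False,a,True),(y,True,b,True)}"
      unfolding K_def by blast
    then show ?thesis unfolding Ob_def
      by (simp only: swE_Un) (cases "s y"; simp add: swE_insert)
  qed
  have avx: "avoid x B" unfolding B_def avoid_Un x_def
    by (intro conjI avoid_led not_inside_PN) auto
  have avy: "avoid y B" unfolding B_def avoid_Un y_def
    by (intro conjI avoid_led not_inside_PN) auto
  have Ocong: "Ob (s(x := \<alpha>, y := \<beta>)) = Ob s" for s \<alpha> \<beta>
    unfolding Ob_def
  proof (rule cong_O)
    show "\<forall>(u,d,v,par)\<in>B. par \<longrightarrow> (s(x := \<alpha>, y := \<beta>)) u = s u"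
    proof (clarify)
      fix u d v par assume "(u,d,v,par) \<in> B"
      then have "u \<noteq> x" "u \<noteq> y" using avx avy unfolding avoid_def by blast+
      then show "(s(x := \<alpha>, y := \<beta>)) u = s u" by simp
    qed
    show "\<forall>q. \<not>(\<exists>r. q = p@r) \<longrightarrow> (s(x := \<alpha>, y := \<beta>)) (PN q) = s (PN q)"
      unfolding x_def y_def by auto
    show "\<forall>k q. (s(x := \<alpha>, y := \<beta>)) (GN k q) = s (GN k q)"
      unfolding x_def y_def by auto
  qed
  have fy: "\<forall>e\<in>Ob s. y \<notin> e" for s
    unfolding Ob_def y_def by (rule fresh_O) (use avy in \<open>simp_all add: y_def\<close>)
  have ins: "inside p a" "inside p b" "inside p t"
    unfolding a_def b_def t_def using inside_nd inside_app by (blast, blast, simp add: inside_def)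
  have fr: "\<forall>z\<in>{a,b,t}. {x,z} \<notin> Ob s" for s
    unfolding Ob_def x_def using root_O[OF avx[unfolded x_def]] ins by blast
  have dX: "distinct (map lbl (leaves (Par Q (Tens R (Leaf (Bot i))))))"
    by (rule distinct_sub[OF dl sub])
  then have lb: "i \<notin> lbl ` set (leaves Q)" "i \<notin> lbl ` set (leaves R)" by auto
  have d: "x \<noteq> y" "a \<noteq> y" "b \<noteq> y" "t \<noteq> y" "x \<noteq> a" "x \<noteq> b" "x \<noteq> t" "b \<noteq> t" "a \<noteq> t"
    using nd_cases[of "p@[False]" Q] nd_cases[of "p@[True,False]" R] lb
      nd_LN[of "p@[False]" Q] nd_LN[of "p@[True,False]" R]
    unfolding x_def y_def a_def b_def t_def by auto
  have VV: "a \<in> V" "b \<in> V" "y \<in> V"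
    using lnodes_sub_V[OF sub, of \<Gamma>] nd_in[of "p@[False]" Q] nd_in[of "p@[True,False]" R]
    unfolding V_def y_def a_def b_def by auto
  have xy: "x \<noteq> y" by (rule d(1))
  have Ox: "Ob (s(x := \<alpha>)) = Ob s" for s \<alpha>
  proof -
    have "s(x := \<alpha>, y := s y) = s(x := \<alpha>)" using xy by (auto simp: fun_eq_iff)
    then show ?thesis using Ocong[of s \<alpha> "s y"] by simp
  qed
  have Oy: "Ob (s(y := \<beta>)) = Ob s" for s \<beta>
  proof -
    have "s(x := s x, y := \<beta>) = s(y := \<beta>)" by (auto simp: fun_eq_iff)
    then show ?thesis using Ocong[of s "s x" \<beta>] by simp
  qed
  show "(\<forall>s. tree (vertices (replace_at P p (Tens (Par Q R) (Leaf (Bot i)))) \<Gamma>)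
              (sw_edges (replace_at P p (Tens (Par Q R) (Leaf (Bot i)))) \<Gamma> s))
     \<Longrightarrow> (\<forall>s. tree (vertices P \<Gamma>) (sw_edges P \<Gamma> s))"
  proof -
    assume h: "\<forall>s. tree (vertices (replace_at P p (Tens (Par Q R) (Leaf (Bot i)))) \<Gamma>)
              (sw_edges (replace_at P p (Tens (Par Q R) (Leaf (Bot i)))) \<Gamma> s)"
    have hK: "tree V (Ob s \<union> {{x,y},{x,t}, if s y then {y,a} else {y,b}})" for s
      using h FT eqK V_def by simp
    show "\<forall>s. tree (vertices P \<Gamma>) (sw_edges P \<Gamma> s)"
    proof
      fix s
      have U: "tree V (Ob s \<union> {{x,y},{x,t}, if \<beta> then {y,a} else {y,b}})" for \<beta>
        using hK[of "s(y := \<beta>)"] xy Oy[of s \<beta>] by simp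
      note C = core_bs_bwd[OF U[of True, unfolded if_True] U[of False, unfolded if_False]
          fy[of s] fr[of s] d VV(2) VV(3)]
      show "tree (vertices P \<Gamma>) (sw_edges P \<Gamma> s)"
        unfolding eqP V_def[symmetric] using C by (cases "s x") simp_all
    qed
  qed
  show "(\<forall>s. tree (vertices P \<Gamma>) (sw_edges P \<Gamma> s)) \<Longrightarrow>
     (\<forall>s q. subtree_at P (p @ [False] @ q) \<noteq> None \<longrightarrow>
        \<not> (adj (ext_sw_edges P \<Gamma> s i))\<^sup>*\<^sup>* (pnode P (p @ [False] @ q)) (LN i)) \<Longrightarrow>
     (\<forall>s. tree (vertices (replace_at P p (Tens (Par Q R) (Leaf (Bot i)))) \<Gamma>)
              (sw_edges (replace_at P p (Tens (Par Q R) (Leaf (Bot i)))) \<Gamma> s))"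
  proof -
    assume h: "\<forall>s. tree (vertices P \<Gamma>) (sw_edges P \<Gamma> s)"
      and side: "\<forall>s q. subtree_at P (p @ [False] @ q) \<noteq> None \<longrightarrow>
        \<not> (adj (ext_sw_edges P \<Gamma> s i))\<^sup>*\<^sup>* (pnode P (p @ [False] @ q)) (LN i)"
    have sQ: "subtree_at P (p @ [False]) = Some Q" using sub_app[OF sub, of "[False]"] by simp
    have pa: "pnode P (p @ [False] @ []) = a"
      using cat_sub[OF sQ, of "[]"] unfolding pnode_cat a_def by simp
    have ext: "\<not> (adj (ext_sw_edges P \<Gamma> s i))\<^sup>*\<^sup>* a t" for s
      using side sQ pa unfolding t_def by (metis append_Nil2 option.distinct(1))
    have LS: "led [] P = ce [] P p \<union> led p (Par Q (Tens R (Leaf (Bot i))))"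
      using led_split[OF sub nlX, of "[]"] by simp
    have "(y,True,t,False) \<in> led p (Par Q (Tens R (Leaf (Bot i))))" unfolding ledX by blast
    then have yin: "(y,True,LN i,False) \<in> led [] P" unfolding LS t_def by blast
    have Oext: "Ob s \<subseteq> ext_sw_edges P \<Gamma> s i" for s
    proof
      fix e assume "e \<in> Ob s"
      then obtain u d v par where e: "e = {u,v}" "(u,d,v,par) \<in> ce [] P p \<union> GE \<Gamma> \<union> B" "\<not> (par \<and> s u = d)"
        unfolding Ob_def swE_def by blast
      have inT: "(u,d,v,par) \<in> tedges P \<Gamma>"
        using e(2) unfolding tedges_split[OF sub nlX] ledX by blast
      have "\<not> (is_PN u \<and> v = LN i)"
      proof
        assume bad: "is_PN u \<and> v = LN i"
        from e(2) consider "(u,d,v,par) \<in> ce [] P p" | "(u,d,v,par) \<in> GE \<Gamma>" | "(u,d,v,par) \<in> B" by blast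
        then show False
        proof cases
          case 2 then show ?thesis using GE_nodes[OF 2] bad by auto
        next
          case 1
          have "(u,d,v,par) \<in> led [] P" using 1 LS by blast
          then have "(u,d,LN i,par) \<in> led [] P" using bad by simp
          moreover note yin
          ultimately have "u = y" using led_LN_unique[OF dl] by blast
          moreover from ce_out[OF 1] have "outside p u" by simp
          ultimately show False unfolding y_def outside_def by simp
        next
          case 3
          have "(u,d,v,par) \<in> led [] P" using 3 LS ledX by blast
          then have "(u,d,LN i,par) \<in> led [] P" using bad by simp
          moreover note yin
          ultimately have "u = y" using led_LN_unique[OF dl] by blast
          with 3 avy show False unfolding avoid_def by blast
        qed
      qed
      then show "e \<in> ext_sw_edges P \<Gamma> s i"
        unfolding ext_sw_edges_def using e inT by blast
    qed
    have nat: "\<not> (adj (Ob s))\<^sup>*\<^sup>* a t" for s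
      using ext[of s] reach_mono[OF Oext[of s]] by blast
    have hX: "tree V (Ob s \<union> {if s x then {x,a} else {x,y}, {y,b}, {y,t}})" for s
      using h eqP V_def by simp
    have "\<forall>s. tree V (swE (ce [] P p \<union> K \<union> GE \<Gamma>) s)"
    proof
      fix s
      have U: "tree V (Ob s \<union> {if \<alpha> then {x,a} else {x,y}, {y,b}, {y,t}})" for \<alpha>
        using hX[of "s(x := \<alpha>)"] xy Ox[of s \<alpha>] by simp
      note C = core_bs_fwd[OF U[of True, unfolded if_True] U[of False, unfolded if_False]
          nat[of s] fy[of s] fr[of s] d VV(1) VV(3)]
      show "tree V (swE (ce [] P p \<union> K \<union> GE \<Gamma>) s)"
        unfolding eqK using C by (cases "s y") simp_all
    qed
    then show ?thesis using FT V_def by simp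
  qed
qed



lemma ppg_step_simp: "ppg_step (a,b) (c,d) \<longleftrightarrow> d = b \<and> pre_proof_graph a b \<and> pre_proof_graph c b \<and> sim_step b a c"
  by (simp add: ppg_step_def)

lemma step_fwd:
  assumes c: "correct P \<Gamma>" and pp: "pre_proof_graph P' \<Gamma>" and st: "sim_step \<Gamma> P P'"
  shows "correct P' \<Gamma>"
proof -
  have h: "\<forall>s. tree (vertices P \<Gamma>) (sw_edges P \<Gamma> s)" and ppP: "pre_proof_graph P \<Gamma>"
    using c unfolding correct_iff by auto
  have dl: "distinct (map lbl (leaves P))" using ppP unfolding pre_proof_graph_def by blast
  from st have "\<forall>s. tree (vertices P' \<Gamma>) (sw_edges P' \<Gamma> s)"
  proof cases
    case (par_comm p Q R) then show ?thesis using comm_case[OF par_comm(2)] h by simp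
  next
    case (par_assoc p Q R S) then show ?thesis using assoc_case[OF par_assoc(2)] h by simp
  next
    case (tens_comm p Q R) then show ?thesis using tens_comm_case[OF tens_comm(2)] h by simp
  next
    case (bot_assoc p i Q j) then show ?thesis using ba_case[OF bot_assoc(2) dl] h by simp
  next
    case (bot_switch p Q R i) then show ?thesis using bs_case(2)[OF bot_switch(2) dl h bot_switch(3)] by simp
  qed
  then show ?thesis unfolding correct_iff using pp by simp
qed

lemma step_bwd:
  assumes c: "correct P' \<Gamma>" and pp: "pre_proof_graph P \<Gamma>" and st: "sim_step \<Gamma> P P'"
  shows "correct P \<Gamma>"
proof -
  have h: "\<forall>s. tree (vertices P' \<Gamma>) (sw_edges P' \<Gamma> s)"
    using c unfolding correct_iff by auto
  have dl: "distinct (map lbl (leaves P))" using pp unfolding pre_proof_graph_def by blast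
  from st have "\<forall>s. tree (vertices P \<Gamma>) (sw_edges P \<Gamma> s)"
  proof cases
    case (par_comm p Q R) then show ?thesis using comm_case[OF par_comm(2)] h by simp
  next
    case (par_assoc p Q R S) then show ?thesis using assoc_case[OF par_assoc(2)] h by simp
  next
    case (tens_comm p Q R) then show ?thesis using tens_comm_case[OF tens_comm(2)] h by simp
  next
    case (bot_assoc p i Q j) then show ?thesis using ba_case[OF bot_assoc(2) dl] h by simp
  next
    case (bot_switch p Q R i) then show ?thesis using bs_case(1)[OF bot_switch(2) dl] h by simp
  qed
  then show ?thesis unfolding correct_iff using pp by simp
qed

theorem lemma1p7:
  fixes P P' :: "('a, 'l) form" and \<Gamma> :: "('a, 'l) form list"
  assumes "correct P \<Gamma>"
    and "sim (P, \<Gamma>) (P', \<Gamma>)"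
  shows "correct P' \<Gamma>"
proof -
  have gen: "(\<lambda>G G'. ppg_step G G' \<or> ppg_step G' G)\<^sup>*\<^sup>* G1 G2 \<Longrightarrow> snd G1 = \<Gamma> \<Longrightarrow> correct (fst G1) \<Gamma>
      \<Longrightarrow> snd G2 = \<Gamma> \<and> correct (fst G2) \<Gamma>" for G1 G2
  proof (induction rule: rtranclp_induct)
    case base then show ?case by simp
  next
    case (step y z)
    obtain Q \<Delta> where y: "y = (Q, \<Delta>)" by (cases y)
    obtain Q' \<Delta>' where z: "z = (Q', \<Delta>')" by (cases z)
    from step.IH step.prems have yc: "\<Delta> = \<Gamma>" "correct Q \<Gamma>" using y by auto
    from step.hyps(2) consider "ppg_step y z" | "ppg_step z y" by blast
    then show ?case
    proof cases
      case 1
      then have "\<Delta>' = \<Gamma>" "pre_proof_graph Q' \<Gamma>" "sim_step \<Gamma> Q Q'"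
        using y z yc by (auto simp: ppg_step_simp)
      then show ?thesis using step_fwd[OF yc(2)] z by simp
    next
      case 2
      then have "\<Delta>' = \<Gamma>" "pre_proof_graph Q' \<Gamma>" "sim_step \<Gamma> Q' Q"
        using y z yc by (auto simp: ppg_step_simp)
      then show ?thesis using step_bwd[OF yc(2)] z by simp
    qed
  qed
  show ?thesis using gen[of "(P, \<Gamma>)" "(P', \<Gamma>)"] assms unfolding sim_def by simp
qed


end
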